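(* Let $H\subset G\subset\Sigma_k$ be subgroups and let $A$ be an object of $H\mathrm{ss}_k$. Then there is a natural isomorphism of based $G$-spaces \[ |I_H^G A|\cong G_+\wedge_H|A|. \]
   Context: $\Delta_{\mathrm{inj}}$ is the category of sets $\{0,\dots,n\}$ and monotone injections. $\Sigma_k$ acts on $(\Delta_{\mathrm{inj}}^{\mathrm{op}})^{\times k}$ by permuting factors. For a group $G$ acting on a category $\mathcal C$, $G\ltimes\mathcal C$ has the objects of $\mathcal C$ and morphisms pairs $(\alpha,f)$ with $\alpha\in G$, $f$ a morphism of $\mathcal C$, with domain that of $f$, target $\alpha$ applied to the target of $f$, and composition $(\alpha,f)\circ(\beta,g)=(\alpha\beta,\beta^{-1}(f)\circ g)$. For $H\subset\Sigma_k$, $H\mathrm{ss}_k$ is the category of functors $H\ltimes(\Delta_{\mathrm{inj}}^{\mathrm{op}})^{\times k}\to\mathrm{Set}_*$ (based $k$-fold multisemisimplicial sets with an $H$-"action" that also permutes multidegrees). For $H\subset G$, $I_H^G:H\mathrm{ss}_k\to G\mathrm{ss}_k$ is left Kan extension along $H\ltimes(\Delta_{\mathrm{inj}}^{\mathrm{op}})^{\times k}\to G\ltimes(\Delta_{\mathrm{inj}}^{\mathrm{op}})^{\times k}$. The geometric realization $|A|$ of $A\in G\mathrm{ss}_k$ is the realization of its underlying $k$-fold multisemisimplicial set; it carries the left $G$-action $\alpha[u_1,\dots,u_k,a]=[u_{\alpha^{-1}(1)},\dots,u_{\alpha^{-1}(k)},(\alpha,\mathrm{id})_*(a)]$ for $(u_1,\dots,u_k)\in\Delta^{\mathbf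 n}$, $a\in A_{\mathbf n}$. *)

theory Defs
  imports "HOL-Analysis.Analysis" "HOL-Combinatorics.Permutations"
begin

text \<open>Multidegrees: lists n = [n_1,...,n_k] standing for ([n_1],...,[n_k]), [m] = {0,...,m}.
 Indices of factors are 0,...,k-1; Sigma_k = permutations of {..<k}.\<close>
type_synonym mdeg = "nat list"
text \<open>A monotone injection [m] -> [n] is encoded by the list of its values f(0) < ... < f(m).\<close>
type_synonym minj = "nat list"
text \<open>A morphism s -> t of (Delta_inj^op)^k: (source s, target t, injections [t_i] -> [s_i]).\<close>
type_synonym cmor = "mdeg \<times> mdeg \<times> minj list"
type_synonym perm = "nat \<Rightarrow> nat"
text \<open>A morphism (alpha, f) of G |x (Delta_inj^op)^k.\<close>
type_synonym gmor = "perm \<times> cmor"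

definition mdegs :: "nat \<Rightarrow> mdeg set" where
  "mdegs k = {n. length n = k}"

definition is_minj :: "nat \<Rightarrow> nat \<Rightarrow> minj \<Rightarrow> bool" where
  "is_minj m n f \<longleftrightarrow> length f = Suc m \<and> sorted_wrt (<) f \<and> (\<forall>j\<in>set f. j \<le> n)"

definition csrc :: "cmor \<Rightarrow> mdeg" where "csrc \<phi> = fst \<phi>"
definition ctgt :: "cmor \<Rightarrow> mdeg" where "ctgt \<phi> = fst (snd \<phi>)"
definition ccomps :: "cmor \<Rightarrow> minj list" where "ccomps \<phi> = snd (snd \<phi>)"

definition cmors :: "nat \<Rightarrow> cmor set" where
  "cmors k = {\<phi>. length (csrc \<phi>) = k \<and> length (ctgt \<phi>) = k \<and> length (ccomps \<phi>) = k \<and>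
      (\<forall>i<k. is_minj (ctgt \<phi> ! i) (csrc \<phi> ! i) (ccomps \<phi> ! i))}"

definition cid :: "mdeg \<Rightarrow> cmor" where
  "cid n = (n, n, map (\<lambda>m. [0..<Suc m]) n)"

text \<open>Composition psi o phi in (Delta_inj^op)^k (phi : s -> t, psi : t -> u).\<close>
definition ccomp :: "cmor \<Rightarrow> cmor \<Rightarrow> cmor" where
  "ccomp \<psi> \<phi> = (csrc \<phi>, ctgt \<psi>,
     map (\<lambda>i. map (\<lambda>j. ccomps \<phi> ! i ! j) (ccomps \<psi> ! i)) [0..<length (ccomps \<phi>)])"

definition plist :: "perm \<Rightarrow> 'x list \<Rightarrow> 'x list" where
  "plist \<alpha> xs = map (\<lambda>i. xs ! inv \<alpha> i) [0..<length xs]"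

definition cact :: "perm \<Rightarrow> cmor \<Rightarrow> cmor" where
  "cact \<alpha> \<phi> = (plist \<alpha> (csrc \<phi>), plist \<alpha> (ctgt \<phi>), plist \<alpha> (ccomps \<phi>))"

definition perm_subgroup :: "nat \<Rightarrow> perm set \<Rightarrow> bool" where
  "perm_subgroup k G \<longleftrightarrow> (\<forall>\<alpha>\<in>G. \<alpha> permutes {..<k}) \<and> id \<in> G \<and>
      (\<forall>\<alpha>\<in>G. \<forall>\<beta>\<in>G. \<alpha> \<circ> \<beta> \<in> G) \<and> (\<forall>\<alpha>\<in>G. inv \<alpha> \<in> G)"

definition gmors :: "nat \<Rightarrow> perm set \<Rightarrow> gmor set" where
  "gmors k G = {m. fst m \<in> G \<and> snd m \<in> cmors k}"

definition gdom :: "gmor \<Rightarrow> mdeg" where "gdom m = csrc (snd m)"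
definition gcod :: "gmor \<Rightarrow> mdeg" where "gcod m = plist (fst m) (ctgt (snd m))"
definition gid :: "mdeg \<Rightarrow> gmor" where "gid n = (id, cid n)"

definition gcomp :: "gmor \<Rightarrow> gmor \<Rightarrow> gmor" where
  "gcomp m1 m2 = (fst m1 \<circ> fst m2, ccomp (cact (inv (fst m2)) (snd m1)) (snd m2))"

section \<open>Objects of H ss_k: functors H |x (Delta_inj^op)^k -> Set_*\<close>

record 'a ssobj =
  carr :: "mdeg \<Rightarrow> 'a set"
  bpt  :: "mdeg \<Rightarrow> 'a"
  fmap :: "gmor \<Rightarrow> 'a \<Rightarrow> 'a"

definition is_ss :: "nat \<Rightarrow> perm set \<Rightarrow> 'a ssobj \<Rightarrow> bool" where
  "is_ss k H A \<longleftrightarrow>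
     (\<forall>n\<in>mdegs k. bpt A n \<in> carr A n) \<and>
     (\<forall>m\<in>gmors k H. \<forall>x\<in>carr A (gdom m). fmap A m x \<in> carr A (gcod m)) \<and>
     (\<forall>m\<in>gmors k H. fmap A m (bpt A (gdom m)) = bpt A (gcod m)) \<and>
     (\<forall>n\<in>mdegs k. \<forall>x\<in>carr A n. fmap A (gid n) x = x) \<and>
     (\<forall>m1\<in>gmors k H. \<forall>m2\<in>gmors k H. gdom m1 = gcod m2 \<longrightarrow>
        (\<forall>x\<in>carr A (gdom m2). fmap A (gcomp m1 m2) x = fmap A m1 (fmap A m2 x)))"

definition nat_trans :: "nat \<Rightarrow> perm set \<Rightarrow> 'a ssobj \<Rightarrow> 'b ssobj \<Rightarrow> (mdeg \<Rightarrow> 'a \<Rightarrow> 'b) \<Rightarrow> bool" where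
  "nat_trans k H A B \<eta> \<longleftrightarrow>
     (\<forall>n\<in>mdegs k. \<eta> n ` carr A n \<subseteq> carr B n \<and> \<eta> n (bpt A n) = bpt B n) \<and>
     (\<forall>m\<in>gmors k H. \<forall>x\<in>carr A (gdom m). \<eta> (gcod m) (fmap A m x) = fmap B m (\<eta> (gdom m) x))"

text \<open>(B, eta) is a left Kan extension of A along H |x C -> G |x C (restriction to H |x C
 is just forgetting the G-morphisms outside H), via its universal property, tested against all
 objects of G ss_k with values in the same type as B.\<close>
definition is_lan :: "nat \<Rightarrow> perm set \<Rightarrow> perm set \<Rightarrow> 'a ssobj \<Rightarrow> 'b ssobj \<Rightarrow> (mdeg \<Rightarrow> 'a \<Rightarrow> 'b) \<Rightarrow> bool" where
  "is_lan k H G A B \<eta> \<longleftrightarrow> is_ss k H A \<and> is_ss k G B \<and> nat_trans k H A B \<eta> \<and>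
     (\<forall>(B'::'b ssobj) \<theta>. is_ss k G B' \<and> nat_trans k H A B' \<theta> \<longrightarrow>
        (\<exists>\<sigma>. nat_trans k G B B' \<sigma> \<and> (\<forall>n\<in>mdegs k. \<forall>x\<in>carr A n. \<sigma> n (\<eta> n x) = \<theta> n x) \<and>
           (\<forall>\<sigma>'. nat_trans k G B B' \<sigma>' \<and> (\<forall>n\<in>mdegs k. \<forall>x\<in>carr A n. \<sigma>' n (\<eta> n x) = \<theta> n x)
              \<longrightarrow> (\<forall>n\<in>mdegs k. \<forall>y\<in>carr B n. \<sigma>' n y = \<sigma> n y))))"

definition quot_top :: "'a topology \<Rightarrow> ('a \<times> 'a) set \<Rightarrow> 'a set topology" where
  "quot_top X R = topology (\<lambda>U. U \<subseteq> topspace X // R \<and> openin X (topspace X \<inter> \<Union>U))"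

text \<open>Delta^{n_1} x ... x Delta^{n_k}, a point being u with u i = barycentric coordinates
 of the i-th factor (i < k), zero elsewhere.\<close>
definition msimplex :: "mdeg \<Rightarrow> (nat \<Rightarrow> nat \<Rightarrow> real) set" where
  "msimplex n = {u. (\<forall>i<length n. (\<forall>j. 0 \<le> u i j) \<and> (\<forall>j. n ! i < j \<longrightarrow> u i j = 0) \<and>
                      (\<Sum>j\<le>n ! i. u i j) = 1) \<and> (\<forall>i j. length n \<le> i \<longrightarrow> u i j = 0)}"

definition simplex_top :: "mdeg \<Rightarrow> (nat \<Rightarrow> nat \<Rightarrow> real) topology" where
  "simplex_top n = subtopology
     (product_topology (\<lambda>_. product_topology (\<lambda>_. euclideanreal) UNIV) UNIV) (msimplex n)"

text \<open>Covariant action of phi : s -> t (injections [t_i] -> [s_i]) : Delta^t -> Delta^s.\<close>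
definition cpush :: "cmor \<Rightarrow> (nat \<Rightarrow> nat \<Rightarrow> real) \<Rightarrow> (nat \<Rightarrow> nat \<Rightarrow> real)" where
  "cpush \<phi> u = (\<lambda>i j. if i < length (ccomps \<phi>)
        then (\<Sum>l\<in>{l. l < length (ccomps \<phi> ! i) \<and> ccomps \<phi> ! i ! l = j}. u i l) else 0)"

type_synonym 'x rpre = "mdeg \<times> (nat \<Rightarrow> nat \<Rightarrow> real) \<times> 'x"
type_synonym 'x rpt = "'x rpre set"

definition pre_real :: "nat \<Rightarrow> 'x ssobj \<Rightarrow> 'x rpre topology" where
  "pre_real k A = sum_topology (\<lambda>n. prod_topology (simplex_top n) (discrete_topology (carr A n))) (mdegs k)"

text \<open>Identifications: (phi_* u, a) ~ (u, phi^* a), and all basepoint simplices are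
 identified to a single basepoint.\<close>
definition real_gen :: "nat \<Rightarrow> 'x ssobj \<Rightarrow> 'x rpre \<Rightarrow> 'x rpre \<Rightarrow> bool" where
  "real_gen k A p q \<longleftrightarrow>
     (\<exists>\<phi>\<in>cmors k. \<exists>u\<in>msimplex (ctgt \<phi>). \<exists>a\<in>carr A (csrc \<phi>).
        p = (csrc \<phi>, cpush \<phi> u, a) \<and> q = (ctgt \<phi>, u, fmap A (id, \<phi>) a)) \<or>
     (\<exists>n\<in>mdegs k. \<exists>m\<in>mdegs k. \<exists>u\<in>msimplex n. \<exists>v\<in>msimplex m.
        p = (n, u, bpt A n) \<and> q = (m, v, bpt A m))"

definition real_rel :: "nat \<Rightarrow> 'x ssobj \<Rightarrow> ('x rpre \<times> 'x rpre) set" where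
  "real_rel k A = {(p, q). p \<in> topspace (pre_real k A) \<and> q \<in> topspace (pre_real k A) \<and>
                           equivclp (real_gen k A) p q}"

definition realization :: "nat \<Rightarrow> 'x ssobj \<Rightarrow> 'x rpt topology" where
  "realization k A = quot_top (pre_real k A) (real_rel k A)"

definition real_class :: "nat \<Rightarrow> 'x ssobj \<Rightarrow> 'x rpre \<Rightarrow> 'x rpt" where
  "real_class k A p = real_rel k A `` {p}"

definition vertex0 :: "nat \<Rightarrow> nat \<Rightarrow> nat \<Rightarrow> real" where
  "vertex0 k = (\<lambda>i j. if i < k \<and> j = 0 then 1 else 0)"

definition real_base :: "nat \<Rightarrow> 'x ssobj \<Rightarrow> 'x rpt" where
  "real_base k A = real_class k A (replicate k 0, vertex0 k, bpt A (replicate k 0))"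

definition pt_act :: "nat \<Rightarrow> 'x ssobj \<Rightarrow> perm \<Rightarrow> 'x rpre \<Rightarrow> 'x rpre" where
  "pt_act k A \<alpha> p = (plist \<alpha> (fst p),
      (\<lambda>i. if i < k then fst (snd p) (inv \<alpha> i) else (\<lambda>_. 0)),
      fmap A (\<alpha>, cid (fst p)) (snd (snd p)))"

definition real_act :: "nat \<Rightarrow> 'x ssobj \<Rightarrow> perm \<Rightarrow> 'x rpt \<Rightarrow> 'x rpt" where
  "real_act k A \<alpha> x = real_class k A (pt_act k A \<alpha> (SOME p. p \<in> x))"

definition real_map :: "nat \<Rightarrow> 'x ssobj \<Rightarrow> 'y ssobj \<Rightarrow> (mdeg \<Rightarrow> 'x \<Rightarrow> 'y) \<Rightarrow> 'x rpt \<Rightarrow> 'y rpt" where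
  "real_map k A B \<sigma> x = (let p = (SOME p. p \<in> x) in
      real_class k B (fst p, fst (snd p), \<sigma> (fst p) (snd (snd p))))"

type_synonym 'x spt = "(perm \<times> 'x rpt) set"

definition smash_pre :: "nat \<Rightarrow> perm set \<Rightarrow> 'x ssobj \<Rightarrow> (perm \<times> 'x rpt) topology" where
  "smash_pre k G A = prod_topology (discrete_topology G) (realization k A)"

definition smash_gen :: "nat \<Rightarrow> perm set \<Rightarrow> perm set \<Rightarrow> 'x ssobj \<Rightarrow> perm \<times> 'x rpt \<Rightarrow> perm \<times> 'x rpt \<Rightarrow> bool" where
  "smash_gen k H G A p q \<longleftrightarrow>
     (\<exists>g\<in>G. \<exists>h\<in>H. \<exists>x\<in>topspace (realization k A). p = (g \<circ> h, x) \<and> q = (g, real_act k A h x)) \<or>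
     (\<exists>g\<in>G. \<exists>g'\<in>G. p = (g, real_base k A) \<and> q = (g', real_base k A))"

definition smash_rel :: "nat \<Rightarrow> perm set \<Rightarrow> perm set \<Rightarrow> 'x ssobj \<Rightarrow> ((perm \<times> 'x rpt) \<times> (perm \<times> 'x rpt)) set" where
  "smash_rel k H G A = {(p, q). p \<in> topspace (smash_pre k G A) \<and> q \<in> topspace (smash_pre k G A) \<and>
                               equivclp (smash_gen k H G A) p q}"

definition smash :: "nat \<Rightarrow> perm set \<Rightarrow> perm set \<Rightarrow> 'x ssobj \<Rightarrow> 'x spt topology" where
  "smash k H G A = quot_top (smash_pre k G A) (smash_rel k H G A)"

definition smash_class :: "nat \<Rightarrow> perm set \<Rightarrow> perm set \<Rightarrow> 'x ssobj \<Rightarrow> perm \<times> 'x rpt \<Rightarrow> 'x spt" where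
  "smash_class k H G A p = smash_rel k H G A `` {p}"

definition smash_base :: "nat \<Rightarrow> perm set \<Rightarrow> perm set \<Rightarrow> 'x ssobj \<Rightarrow> 'x spt" where
  "smash_base k H G A = smash_class k H G A (id, real_base k A)"

definition smash_act :: "nat \<Rightarrow> perm set \<Rightarrow> perm set \<Rightarrow> 'x ssobj \<Rightarrow> perm \<Rightarrow> 'x spt \<Rightarrow> 'x spt" where
  "smash_act k H G A \<alpha> y = (let p = (SOME p. p \<in> y) in smash_class k H G A (\<alpha> \<circ> fst p, snd p))"

definition smash_map :: "nat \<Rightarrow> perm set \<Rightarrow> perm set \<Rightarrow> 'x ssobj \<Rightarrow> 'y ssobj \<Rightarrow> (mdeg \<Rightarrow> 'x \<Rightarrow> 'y) \<Rightarrow> 'x spt \<Rightarrow> 'y spt" where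
  "smash_map k H G A A' \<psi> y = (let p = (SOME p. p \<in> y) in
      smash_class k H G A' (fst p, real_map k A A' \<psi> (snd p)))"

definition based_G_homeo :: "perm set \<Rightarrow> 'p topology \<Rightarrow> 'p \<Rightarrow> (perm \<Rightarrow> 'p \<Rightarrow> 'p) \<Rightarrow>
    'q topology \<Rightarrow> 'q \<Rightarrow> (perm \<Rightarrow> 'q \<Rightarrow> 'q) \<Rightarrow> ('p \<Rightarrow> 'q) \<Rightarrow> bool" where
  "based_G_homeo G X x0 actX Y y0 actY f \<longleftrightarrow> homeomorphic_map X Y f \<and> f x0 = y0 \<and>
     (\<forall>\<alpha>\<in>G. \<forall>x\<in>topspace X. f (actX \<alpha> x) = actY \<alpha> (f x))"

end

theory Submission
  imports Defs
begin

declare upt_Suc[simp del]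

lemma perm_inv_lt: "a permutes {..<k} \<Longrightarrow> i < k \<Longrightarrow> inv a i < k"
  by (metis lessThan_iff permutes_in_image permutes_inv)
lemma perm_lt: "a permutes {..<k} \<Longrightarrow> i < k \<Longrightarrow> a i < k"
  by (metis lessThan_iff permutes_in_image)
lemma perm_inv_comp: "a permutes S \<Longrightarrow> b permutes S \<Longrightarrow> inv (a \<circ> b) = inv b \<circ> inv a"
  by (simp add: o_inv_distrib permutes_bij)

lemma pl_len[simp]: "length (plist a xs) = length xs" by (simp add: plist_def)
lemma pl_nth[simp]: "i < length xs \<Longrightarrow> plist a xs ! i = xs ! inv a i" by (simp add: plist_def)
lemma pl_id[simp]: "plist id xs = xs" by (simp add: plist_def map_nth)

lemma pl_comp: assumes "a permutes {..<k}" "b permutes {..<k}" "length xs = k"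
  shows "plist a (plist b xs) = plist (a \<circ> b) xs"
proof (rule nth_equalityI)
  fix i assume "i < length (plist a (plist b xs))"
  then have i: "i < k" using assms by simp
  then show "plist a (plist b xs) ! i = plist (a \<circ> b) xs ! i"
    using assms perm_inv_lt[OF assms(1) i] by (simp add: perm_inv_comp[OF assms(1,2)])
qed simp

lemma pl_inv: assumes "a permutes {..<k}" "length xs = k"
  shows "plist (inv a) (plist a xs) = xs"
  using pl_comp[OF permutes_inv[OF assms(1)] assms(1,2)] permutes_inv_o(2)[OF assms(1)] by simp

lemma pl_inv2: assumes "a permutes {..<k}" "length xs = k"
  shows "plist a (plist (inv a) xs) = xs"
  using pl_comp[OF assms(1) permutes_inv[OF assms(1)] assms(2)] permutes_inv_o(1)[OF assms(1)] by simp

lemma pl_map: assumes "a permutes {..<k}" "length xs = k"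
  shows "plist a (map f xs) = map f (plist a xs)"
  by (rule nth_equalityI) (use assms perm_inv_lt[OF assms(1)] in auto)

lemma pl_mdegs: "n \<in> mdegs k \<Longrightarrow> plist a n \<in> mdegs k" by (simp add: mdegs_def)

lemma cid_simps[simp]: "csrc (cid n) = n" "ctgt (cid n) = n" "ccomps (cid n) = map (\<lambda>m. [0..<Suc m]) n"
  by (auto simp: cid_def csrc_def ctgt_def ccomps_def)
lemma cact_simps[simp]: "csrc (cact a f) = plist a (csrc f)" "ctgt (cact a f) = plist a (ctgt f)"
  "ccomps (cact a f) = plist a (ccomps f)"
  by (auto simp: cact_def csrc_def ctgt_def ccomps_def)
lemma ccomp_simps[simp]: "csrc (ccomp g f) = csrc f" "ctgt (ccomp g f) = ctgt g"
  "ccomps (ccomp g f) = map (\<lambda>i. map (\<lambda>j. ccomps f ! i ! j) (ccomps g ! i)) [0..<length (ccomps f)]"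
  by (auto simp: ccomp_def csrc_def ctgt_def ccomps_def)
lemma cmor_eq: "f = (csrc f, ctgt f, ccomps f)" by (simp add: csrc_def ctgt_def ccomps_def)
lemma cmor_eqI: "csrc f = csrc g \<Longrightarrow> ctgt f = ctgt g \<Longrightarrow> ccomps f = ccomps g \<Longrightarrow> f = g"
  by (metis cmor_eq)

lemma is_minj_upt: "is_minj m m [0..<Suc m]" by (auto simp: is_minj_def simp del: upt_Suc)

lemma cid_cmors: "n \<in> mdegs k \<Longrightarrow> cid n \<in> cmors k"
  by (auto simp: cmors_def mdegs_def is_minj_upt simp del: upt_Suc)

lemma cmorsD: "f \<in> cmors k \<Longrightarrow> length (csrc f) = k \<and> length (ctgt f) = k \<and> length (ccomps f) = k \<and>
      (\<forall>i<k. is_minj (ctgt f ! i) (csrc f ! i) (ccomps f ! i))"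
  by (simp add: cmors_def)

lemma cact_cmors: assumes "a permutes {..<k}" "f \<in> cmors k" shows "cact a f \<in> cmors k"
  using assms perm_inv_lt[OF assms(1)] by (auto simp: cmors_def)

lemma cact_cid: assumes "a permutes {..<k}" "length n = k" shows "cact a (cid n) = cid (plist a n)"
  by (rule cmor_eqI) (use assms pl_map in auto)

lemma cact_comp: assumes "a permutes {..<k}" "b permutes {..<k}" "f \<in> cmors k"
  shows "cact a (cact b f) = cact (a \<circ> b) f"
  using assms by (intro cmor_eqI) (auto simp: pl_comp cmors_def)

lemma cact_id[simp]: "cact id f = f" by (rule cmor_eqI) auto

lemma cact_inv: assumes "a permutes {..<k}" "f \<in> cmors k" shows "cact (inv a) (cact a f) = f"
  using assms by (intro cmor_eqI) (auto simp: pl_inv cmors_def)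

lemma ccomp_cid_left: assumes "f \<in> cmors k" shows "ccomp (cid (ctgt f)) f = f"
proof (rule cmor_eqI)
  have "\<And>i. i < k \<Longrightarrow> map ((!) (ccomps f ! i)) [0..<Suc (ctgt f ! i)] = ccomps f ! i"
    using assms by (auto simp: cmors_def is_minj_def intro!: nth_equalityI)
  then show "ccomps (ccomp (cid (ctgt f)) f) = ccomps f"
    using assms by (auto simp: cmors_def intro!: nth_equalityI)
qed auto

lemma ccomp_cid_right: assumes "f \<in> cmors k" shows "ccomp f (cid (csrc f)) = f"
proof (rule cmor_eqI)
  have "\<And>i. i < k \<Longrightarrow> map (\<lambda>j. [0..<Suc (csrc f ! i)] ! j) (ccomps f ! i) = ccomps f ! i"
  proof -
    fix i assume i: "i < k"
    have "\<forall>j\<in>set (ccomps f ! i). j \<le> csrc f ! i" using assms i by (auto simp: cmors_def is_minj_def)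
    then show "map (\<lambda>j. [0..<Suc (csrc f ! i)] ! j) (ccomps f ! i) = ccomps f ! i"
      by (intro nth_equalityI) (auto simp: nth_upt less_Suc_eq_le)
  qed
  then show "ccomps (ccomp f (cid (csrc f))) = ccomps f"
    using assms by (auto simp: cmors_def intro!: nth_equalityI)
qed auto

lemma ccomp_cid_cid: "ccomp (cid n) (cid n) = cid n"
  by (rule cmor_eqI) (auto intro!: nth_equalityI)

lemma gdom_simp[simp]: "gdom (a, f) = csrc f" by (simp add: gdom_def)
lemma gcod_simp[simp]: "gcod (a, f) = plist a (ctgt f)" by (simp add: gcod_def)
lemma gid_eq: "gid n = (id, cid n)" by (simp add: gid_def)

lemma gcomp_simp: "gcomp (a, f) (b, g) = (a \<circ> b, ccomp (cact (inv b) f) g)" by (simp add: gcomp_def)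

lemma gcomp1: assumes "f \<in> cmors k" shows "gcomp (a, cid (ctgt f)) (id, f) = (a, f)"
  using ccomp_cid_left[OF assms] by (simp add: gcomp_simp)

lemma gcomp2: assumes "a permutes {..<k}" "f \<in> cmors k"
  shows "gcomp (id, cact a f) (a, cid (csrc f)) = (a, f)"
  using assms by (simp add: gcomp_simp cact_inv ccomp_cid_right)

lemma gcomp3: assumes "a permutes {..<k}" "b permutes {..<k}" "length n = k"
  shows "gcomp (a, cid (plist b n)) (b, cid n) = (a \<circ> b, cid n)"
proof -
  have "cact (inv b) (cid (plist b n)) = cid n"
    using cact_cid[OF permutes_inv[OF assms(2)], of "plist b n"] assms pl_inv[OF assms(2,3)] by simp
  then show ?thesis by (simp add: gcomp_simp ccomp_cid_cid)
qed

lemma gcomp4: assumes "g permutes {..<k}" "f \<in> cmors k" "plist (inv g) (csrc f) = n"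
  shows "gcomp (a, f) (g, cid n) = (a \<circ> g, cact (inv g) f)"
proof -
  have "cact (inv g) f \<in> cmors k" using assms by (simp add: cact_cmors permutes_inv)
  then show ?thesis using ccomp_cid_right[of "cact (inv g) f" k] assms by (simp add: gcomp_simp)
qed


lemma psg_perm: "perm_subgroup k G \<Longrightarrow> a \<in> G \<Longrightarrow> a permutes {..<k}" by (simp add: perm_subgroup_def)
lemma psg_id: "perm_subgroup k G \<Longrightarrow> id \<in> G" by (simp add: perm_subgroup_def)
lemma psg_comp: "perm_subgroup k G \<Longrightarrow> a \<in> G \<Longrightarrow> b \<in> G \<Longrightarrow> a \<circ> b \<in> G" by (simp add: perm_subgroup_def)
lemma psg_inv: "perm_subgroup k G \<Longrightarrow> a \<in> G \<Longrightarrow> inv a \<in> G" by (simp add: perm_subgroup_def)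

lemma gmorsI: "a \<in> G \<Longrightarrow> f \<in> cmors k \<Longrightarrow> (a, f) \<in> gmors k G" by (simp add: gmors_def)
lemma mdegsI: "length n = k \<Longrightarrow> n \<in> mdegs k" by (simp add: mdegs_def)
lemma mdegsD: "n \<in> mdegs k \<Longrightarrow> length n = k" by (simp add: mdegs_def)

lemma csrc_mdegs: "f \<in> cmors k \<Longrightarrow> csrc f \<in> mdegs k" by (simp add: cmors_def mdegs_def)
lemma ctgt_mdegs: "f \<in> cmors k \<Longrightarrow> ctgt f \<in> mdegs k" by (simp add: cmors_def mdegs_def)

lemma ss_carr: "is_ss k K C \<Longrightarrow> m \<in> gmors k K \<Longrightarrow> x \<in> carr C (gdom m) \<Longrightarrow> fmap C m x \<in> carr C (gcod m)"
  by (simp add: is_ss_def)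
lemma ss_bpt: "is_ss k K C \<Longrightarrow> n \<in> mdegs k \<Longrightarrow> bpt C n \<in> carr C n"
  by (simp add: is_ss_def)
lemma ss_bpt_map: "is_ss k K C \<Longrightarrow> m \<in> gmors k K \<Longrightarrow> fmap C m (bpt C (gdom m)) = bpt C (gcod m)"
  by (simp add: is_ss_def)
lemma ss_id: "is_ss k K C \<Longrightarrow> n \<in> mdegs k \<Longrightarrow> x \<in> carr C n \<Longrightarrow> fmap C (id, cid n) x = x"
  by (simp add: is_ss_def gid_def)
lemma ss_comp: "is_ss k K C \<Longrightarrow> m1 \<in> gmors k K \<Longrightarrow> m2 \<in> gmors k K \<Longrightarrow> gdom m1 = gcod m2 \<Longrightarrow>
   x \<in> carr C (gdom m2) \<Longrightarrow> fmap C (gcomp m1 m2) x = fmap C m1 (fmap C m2 x)"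
  by (simp add: is_ss_def)

lemma ss_carr': "is_ss k K C \<Longrightarrow> a \<in> K \<Longrightarrow> f \<in> cmors k \<Longrightarrow> x \<in> carr C (csrc f) \<Longrightarrow>
   fmap C (a, f) x \<in> carr C (plist a (ctgt f))"
  using ss_carr[of k K C "(a,f)" x] by (simp add: gmorsI)

lemma ss_F1: assumes "perm_subgroup k K" "is_ss k K C" "a \<in> K" "f \<in> cmors k" "x \<in> carr C (csrc f)"
  shows "fmap C (a, f) x = fmap C (a, cid (ctgt f)) (fmap C (id, f) x)"
  using ss_comp[OF assms(2), of "(a, cid (ctgt f))" "(id, f)" x] gcomp1[OF assms(4), of a] assms
  by (simp add: gmorsI psg_id cid_cmors ctgt_mdegs)

lemma ss_F2: assumes "perm_subgroup k K" "is_ss k K C" "a \<in> K" "f \<in> cmors k" "x \<in> carr C (csrc f)"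
  shows "fmap C (a, f) x = fmap C (id, cact a f) (fmap C (a, cid (csrc f)) x)"
  using ss_comp[OF assms(2), of "(id, cact a f)" "(a, cid (csrc f))" x] gcomp2[OF psg_perm[OF assms(1,3)] assms(4)] assms
  by (simp add: gmorsI psg_id cid_cmors csrc_mdegs cact_cmors psg_perm)

lemma ss_F3: assumes "perm_subgroup k K" "is_ss k K C" "a \<in> K" "b \<in> K" "n \<in> mdegs k" "x \<in> carr C n"
  shows "fmap C (a, cid (plist b n)) (fmap C (b, cid n) x) = fmap C (a \<circ> b, cid n) x"
  using ss_comp[OF assms(2), of "(a, cid (plist b n))" "(b, cid n)" x]
    gcomp3[OF psg_perm[OF assms(1,3)] psg_perm[OF assms(1,4)] mdegsD[OF assms(5)]] assms
  by (simp add: gmorsI cid_cmors pl_mdegs)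

lemma ss_inv: assumes "perm_subgroup k K" "is_ss k K C" "a \<in> K" "n \<in> mdegs k" "x \<in> carr C n"
  shows "fmap C (inv a, cid (plist a n)) (fmap C (a, cid n) x) = x"
  using ss_F3[OF assms(1,2) psg_inv[OF assms(1,3)] assms(3,4,5)] permutes_inv_o(2)[OF psg_perm[OF assms(1,3)]]
    ss_id[OF assms(2,4,5)] by simp

definition uperm :: "nat \<Rightarrow> perm \<Rightarrow> (nat \<Rightarrow> nat \<Rightarrow> real) \<Rightarrow> (nat \<Rightarrow> nat \<Rightarrow> real)" where
  "uperm k a u = (\<lambda>i. if i < k then u (inv a i) else (\<lambda>_. 0))"

lemma pt_act_eq: "pt_act k C a (n, u, x) = (plist a n, uperm k a u, fmap C (a, cid n) x)"
  unfolding pt_act_def uperm_def by (simp cong: if_cong)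

lemma msimplexD: "u \<in> msimplex n \<Longrightarrow> i < length n \<Longrightarrow> 0 \<le> u i j"
    "u \<in> msimplex n \<Longrightarrow> i < length n \<Longrightarrow> n ! i < j \<Longrightarrow> u i j = 0"
    "u \<in> msimplex n \<Longrightarrow> i < length n \<Longrightarrow> (\<Sum>j\<le>n ! i. u i j) = 1"
    "u \<in> msimplex n \<Longrightarrow> length n \<le> i \<Longrightarrow> u i j = 0"
  by (auto simp: msimplex_def)

lemma uperm_msimplex: assumes "u \<in> msimplex n" "length n = k" "a permutes {..<k}"
  shows "uperm k a u \<in> msimplex (plist a n)"
  using assms perm_inv_lt[OF assms(3)] by (auto simp: msimplex_def uperm_def)

lemma uperm_comp: assumes "a permutes {..<k}" "b permutes {..<k}"
  shows "uperm k a (uperm k b u) = uperm k (a \<circ> b) u"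
  using perm_inv_lt[OF assms(1)] by (auto simp: uperm_def perm_inv_comp[OF assms] fun_eq_iff)

lemma uperm_id: assumes "u \<in> msimplex n" "length n = k" shows "uperm k id u = u"
  using assms by (auto simp: uperm_def fun_eq_iff msimplex_def)

lemma uperm_inv: assumes "u \<in> msimplex n" "length n = k" "a permutes {..<k}"
  shows "uperm k (inv a) (uperm k a u) = u"
  using uperm_comp[OF permutes_inv[OF assms(3)] assms(3)] permutes_inv_o(2)[OF assms(3)] uperm_id[OF assms(1,2)]
  by simp

lemma cpush_msimplex: assumes f: "f \<in> cmors k" and u: "u \<in> msimplex (ctgt f)"
  shows "cpush f u \<in> msimplex (csrc f)"
proof -
  have len: "length (csrc f) = k" "length (ctgt f) = k" "length (ccomps f) = k" using f by (auto simp: cmors_def)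
  have mi: "\<And>i. i < k \<Longrightarrow> is_minj (ctgt f ! i) (csrc f ! i) (ccomps f ! i)" using f by (auto simp: cmors_def)
  show ?thesis unfolding msimplex_def
  proof (intro CollectI conjI allI impI)
    fix i j assume i: "i < length (csrc f)"
    show "0 \<le> cpush f u i j" using i len msimplexD(1)[OF u] by (auto simp: cpush_def intro!: sum_nonneg)
  next
    fix i j assume i: "i < length (csrc f)" and j: "csrc f ! i < j"
    have "{l. l < length (ccomps f ! i) \<and> ccomps f ! i ! l = j} = {}"
      using mi[of i] i len j by (auto simp: is_minj_def) (metis leD nth_mem)
    note E = this
    show "cpush f u i j = 0" unfolding cpush_def E by simp
  next
    fix i assume i: "i < length (csrc f)"
    let ?c = "ccomps f ! i"
    have "(\<Sum>j\<le>csrc f ! i. cpush f u i j) = (\<Sum>j\<le>csrc f ! i. \<Sum>l\<in>{l. l \<in> {..<length ?c} \<and> ?c ! l = j}. u i l)"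
      using i len by (simp add: cpush_def)
    also have "\<dots> = (\<Sum>l<length ?c. u i l)"
      by (rule sum.group) (use mi[of i] i len in \<open>auto simp: is_minj_def\<close>)
    also have "\<dots> = (\<Sum>l\<le>ctgt f ! i. u i l)"
      using mi[of i] i len by (simp add: is_minj_def lessThan_Suc_atMost)
    also have "\<dots> = 1" using msimplexD(3)[OF u, of i] i len by simp
    finally show "(\<Sum>j\<le>csrc f ! i. cpush f u i j) = 1" .
  next
    fix i j assume "length (csrc f) \<le> i"
    then show "cpush f u i j = 0" using len by (simp add: cpush_def)
  qed
qed

lemma uperm_cpush: assumes f: "f \<in> cmors k" and a: "a permutes {..<k}"
  shows "uperm k a (cpush f u) = cpush (cact a f) (uperm k a u)"
  using f perm_inv_lt[OF a] by (auto simp: uperm_def cpush_def cmors_def fun_eq_iff)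


lemma equivclp_map:
  assumes "equivclp r x y" "\<And>a b. r a b \<Longrightarrow> equivclp r' (f a) (f b)"
  shows "equivclp r' (f x) (f y)"
  using assms(1)
proof (induction rule: equivclp_induct)
  case (step y z)
  then show ?case using assms(2) by (meson equivclp_sym equivclp_trans)
qed simp

lemma equivclp_closed:
  assumes "equivclp r x y" "x \<in> S" "\<And>a b. r a b \<Longrightarrow> a \<in> S \<and> b \<in> S"
  shows "y \<in> S"
  using assms(1) by (induction rule: equivclp_induct) (use assms in auto)

lemma quot_istop: assumes "equiv (topspace X) R"
  shows "istopology (\<lambda>U. U \<subseteq> topspace X // R \<and> openin X (topspace X \<inter> \<Union>U))"
  unfolding istopology_def
proof (rule conjI; intro allI impI)
  fix S T assume S: "S \<subseteq> topspace X // R \<and> openin X (topspace X \<inter> \<Union>S)"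
    and T: "T \<subseteq> topspace X // R \<and> openin X (topspace X \<inter> \<Union>T)"
  have "\<Union>(S \<inter> T) = \<Union>S \<inter> \<Union>T"
  proof
    show "\<Union>S \<inter> \<Union>T \<subseteq> \<Union>(S \<inter> T)"
    proof
      fix x assume "x \<in> \<Union>S \<inter> \<Union>T"
      then obtain c d where c: "c \<in> S" "x \<in> c" and d: "d \<in> T" "x \<in> d" by auto
      have "c \<in> topspace X // R" "d \<in> topspace X // R" using c d S T by blast+
      then have "c = d" using quotient_disj[OF assms, of c d] c d by blast
      then show "x \<in> \<Union>(S \<inter> T)" using c d by auto
    qed
  qed auto
  then have "topspace X \<inter> \<Union>(S \<inter> T) = (topspace X \<inter> \<Union>S) \<inter> (topspace X \<inter> \<Union>T)" by auto
  moreover have "openin X ((topspace X \<inter> \<Union>S) \<inter> (topspace X \<inter> \<Union>T))"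
    by (rule openin_Int) (use S T in blast)+
  ultimately have "openin X (topspace X \<inter> \<Union>(S \<inter> T))" by simp
  moreover have "S \<inter> T \<subseteq> topspace X // R" using S by blast
  ultimately show "S \<inter> T \<subseteq> topspace X // R \<and> openin X (topspace X \<inter> \<Union>(S \<inter> T))"
    by blast
next
  fix K assume K: "\<forall>U\<in>K. U \<subseteq> topspace X // R \<and> openin X (topspace X \<inter> \<Union>U)"
  have "topspace X \<inter> \<Union>(\<Union>K) = (\<Union>U\<in>K. topspace X \<inter> \<Union>U)" by auto
  moreover have "openin X (\<Union>U\<in>K. topspace X \<inter> \<Union>U)" using K by (intro openin_Union) auto
  ultimately have "openin X (topspace X \<inter> \<Union>(\<Union>K))" by simp
  moreover have "\<Union>K \<subseteq> topspace X // R" using K by blast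
  ultimately show "\<Union>K \<subseteq> topspace X // R \<and> openin X (topspace X \<inter> \<Union>(\<Union>K))"
    by blast
qed

lemma quot_top_open: assumes "equiv (topspace X) R"
  shows "openin (quot_top X R) U \<longleftrightarrow> U \<subseteq> topspace X // R \<and> openin X (topspace X \<inter> \<Union>U)"
  using quot_istop[OF assms] by (simp add: quot_top_def)

lemma quot_top_space: assumes "equiv (topspace X) R"
  shows "topspace (quot_top X R) = topspace X // R"
proof -
  have "topspace X \<inter> \<Union>(topspace X // R) = topspace X"
    using Union_quotient[OF assms] by simp
  then have "openin (quot_top X R) (topspace X // R)" using quot_top_open[OF assms] by simp
  then have "topspace X // R \<subseteq> topspace (quot_top X R)" by (simp add: openin_subset)
  moreover have "topspace (quot_top X R) \<subseteq> topspace X // R"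
    using quot_top_open[OF assms, of "topspace (quot_top X R)"] by auto
  ultimately show ?thesis by auto
qed

lemma quot_top_map: assumes "equiv (topspace X) R"
  shows "quotient_map X (quot_top X R) (\<lambda>x. R `` {x})"
  unfolding quotient_map_def
proof (intro conjI allI impI)
  show "(\<lambda>x. R `` {x}) ` topspace X = topspace (quot_top X R)"
    unfolding quot_top_space[OF assms] quotient_def by auto
next
  fix U assume U: "U \<subseteq> topspace (quot_top X R)"
  have "{x \<in> topspace X. R `` {x} \<in> U} = topspace X \<inter> \<Union>U"
  proof
    show "topspace X \<inter> \<Union>U \<subseteq> {x \<in> topspace X. R `` {x} \<in> U}"
    proof
      fix x assume x: "x \<in> topspace X \<inter> \<Union>U"
      then obtain c where c: "c \<in> U" "x \<in> c" by auto
      then have "c \<in> topspace X // R" using U quot_top_space[OF assms] by auto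
      then obtain y where "y \<in> topspace X" "c = R `` {y}" by (auto simp: quotient_def)
      then have "(y, x) \<in> R" using c(2) by simp
      then have "R `` {x} = c" using equiv_class_eq[OF assms] \<open>c = R `` {y}\<close> by metis
      then show "x \<in> {x \<in> topspace X. R `` {x} \<in> U}" using x c by auto
    qed
  next
    show "{x \<in> topspace X. R `` {x} \<in> U} \<subseteq> topspace X \<inter> \<Union>U"
    proof
      fix x assume x: "x \<in> {x \<in> topspace X. R `` {x} \<in> U}"
      then have "x \<in> R `` {x}" using equiv_class_self[OF assms] by blast
      then show "x \<in> topspace X \<inter> \<Union>U" using x by blast
    qed
  qed
  then show "openin X {x \<in> topspace X. R `` {x} \<in> U} = openin (quot_top X R) U"
    using U quot_top_open[OF assms] quot_top_space[OF assms] by auto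
qed

lemma continuous_from_sum:
  assumes "\<And>i. i \<in> I \<Longrightarrow> continuous_map (X i) Y (\<lambda>x. f (i, x))"
  shows "continuous_map (sum_topology X I) Y f"
  unfolding continuous_map_def
proof (intro conjI allI impI)
  show "f \<in> topspace (sum_topology X I) \<rightarrow> topspace Y"
    using assms by (auto simp: continuous_map_def Pi_iff)
next
  fix U assume U: "openin Y U"
  have "\<And>i. i \<in> I \<Longrightarrow> openin (X i) {x. (i, x) \<in> {x \<in> topspace (sum_topology X I). f x \<in> U}}"
  proof -
    fix i assume i: "i \<in> I"
    have "{x. (i, x) \<in> {x \<in> topspace (sum_topology X I). f x \<in> U}} = {x \<in> topspace (X i). f (i, x) \<in> U}"
      using i by auto
    then show "openin (X i) {x. (i, x) \<in> {x \<in> topspace (sum_topology X I). f x \<in> U}}"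
      using assms[OF i] U by (simp add: continuous_map_def)
  qed
  then show "openin (sum_topology X I) {x \<in> topspace (sum_topology X I). f x \<in> U}"
    by (subst openin_sum_topology) auto
qed

lemma continuous_from_discrete_prod:
  assumes "\<And>s. s \<in> S \<Longrightarrow> continuous_map X Y (\<lambda>x. f (s, x))"
  shows "continuous_map (prod_topology (discrete_topology S) X) Y f"
  unfolding continuous_map_def
proof (intro conjI allI impI)
  show "f \<in> topspace (prod_topology (discrete_topology S) X) \<rightarrow> topspace Y"
    using assms by (auto simp: continuous_map_def Pi_iff)
next
  fix U assume U: "openin Y U"
  show "openin (prod_topology (discrete_topology S) X) {x \<in> topspace (prod_topology (discrete_topology S) X). f x \<in> U}"
    unfolding openin_prod_topology_alt
  proof (intro allI impI)
    fix s x assume p: "(s, x) \<in> {x \<in> topspace (prod_topology (discrete_topology S) X). f x \<in> U}"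
    have s: "s \<in> S" and x: "x \<in> topspace X" and fx: "f (s, x) \<in> U" using p by auto
    let ?V = "{y \<in> topspace X. f (s, y) \<in> U}"
    have "openin X ?V" using assms[OF s] U by (simp add: continuous_map_def)
    moreover have "openin (discrete_topology S) {s}" using s by simp
    moreover have "{s} \<times> ?V \<subseteq> {x \<in> topspace (prod_topology (discrete_topology S) X). f x \<in> U}"
      using s by auto
    ultimately show "\<exists>Ua V. openin (discrete_topology S) Ua \<and> openin X V \<and> s \<in> Ua \<and> x \<in> V \<and>
         Ua \<times> V \<subseteq> {x \<in> topspace (prod_topology (discrete_topology S) X). f x \<in> U}"
      using x fx by blast
  qed
qed


lemma top_simplex[simp]: "topspace (simplex_top n) = msimplex n"
  by (simp add: simplex_top_def)

lemma top_pre_real: "topspace (pre_real k C) = Sigma (mdegs k) (\<lambda>n. msimplex n \<times> carr C n)"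
  by (auto simp: pre_real_def)

lemma top_pre_real_iff[simp]: "(n, u, x) \<in> topspace (pre_real k C) \<longleftrightarrow> n \<in> mdegs k \<and> u \<in> msimplex n \<and> x \<in> carr C n"
  by (simp add: top_pre_real)

lemma ss_mono: "is_ss k G C \<Longrightarrow> H \<subseteq> G \<Longrightarrow> is_ss k H C"
  unfolding is_ss_def gmors_def by blast

lemma nat_trans_mono: "nat_trans k G C D s \<Longrightarrow> H \<subseteq> G \<Longrightarrow> nat_trans k H C D s"
  unfolding nat_trans_def gmors_def by blast

context
  fixes k K C
  assumes K: "perm_subgroup k K" and C: "is_ss k K C"
begin

lemma gen_top: "real_gen k C p q \<Longrightarrow> p \<in> topspace (pre_real k C) \<and> q \<in> topspace (pre_real k C)"
  unfolding real_gen_def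
proof (elim disjE bexE conjE)
  fix f u x assume f: "f \<in> cmors k" and u: "u \<in> msimplex (ctgt f)" and x: "x \<in> carr C (csrc f)"
    and p: "p = (csrc f, cpush f u, x)" and q: "q = (ctgt f, u, fmap C (id, f) x)"
  show ?thesis using p q f u x cpush_msimplex[OF f u] ss_carr'[OF C psg_id[OF K] f x]
    by (simp add: csrc_mdegs ctgt_mdegs)
next
  fix n m u v assume "n \<in> mdegs k" "m \<in> mdegs k" "u \<in> msimplex n" "v \<in> msimplex m"
    "p = (n, u, bpt C n)" "q = (m, v, bpt C m)"
  then show ?thesis using ss_bpt[OF C] by simp
qed

lemma rel_equiv: "equiv (topspace (pre_real k C)) (real_rel k C)"
  unfolding equiv_def refl_on_def sym_def trans_def real_rel_def
  by (auto intro: equivclp_sym equivclp_trans)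

lemma class_eq: "p \<in> topspace (pre_real k C) \<Longrightarrow> q \<in> topspace (pre_real k C) \<Longrightarrow>
   real_class k C p = real_class k C q \<longleftrightarrow> equivclp (real_gen k C) p q"
  unfolding real_class_def using eq_equiv_class_iff[OF rel_equiv] by (simp add: real_rel_def)

lemma gen_class: "real_gen k C p q \<Longrightarrow> real_class k C p = real_class k C q"
  using gen_top class_eq by (meson equivclp_into_equivclp equivclp_refl)

lemma class_mem: "p \<in> topspace (pre_real k C) \<Longrightarrow> p \<in> real_class k C p"
  unfolding real_class_def using equiv_class_self[OF rel_equiv] by blast

lemma top_real: "topspace (realization k C) = topspace (pre_real k C) // real_rel k C"
  unfolding realization_def using quot_top_space[OF rel_equiv] .

lemma class_top: "p \<in> topspace (pre_real k C) \<Longrightarrow> real_class k C p \<in> topspace (realization k C)"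
  unfolding top_real real_class_def by (rule quotientI)

lemma real_quot: "quotient_map (pre_real k C) (realization k C) (real_class k C)"
  using quot_top_map[OF rel_equiv] unfolding realization_def real_class_def .

lemma top_realE: assumes "x \<in> topspace (realization k C)"
  obtains p where "p \<in> topspace (pre_real k C)" "x = real_class k C p"
  using assms unfolding top_real real_class_def by (auto elim: quotientE)

lemma class_cases: assumes "p \<in> topspace (pre_real k C)"
  obtains n u x where "p = (n, u, x)" "n \<in> mdegs k" "u \<in> msimplex n" "x \<in> carr C n"
  using assms by (cases p) auto

lemma some_rep: assumes "p \<in> topspace (pre_real k C)"
  shows "(SOME q. q \<in> real_class k C p) \<in> topspace (pre_real k C) \<and>
         equivclp (real_gen k C) p (SOME q. q \<in> real_class k C p)"
proof -
  define q0 where "q0 = (SOME q. q \<in> real_class k C p)"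
  have "q0 \<in> real_class k C p" unfolding q0_def using class_mem[OF assms] by (rule someI)
  then have "(p, q0) \<in> real_rel k C" by (simp add: real_class_def)
  then have "q0 \<in> topspace (pre_real k C) \<and> equivclp (real_gen k C) p q0" by (simp add: real_rel_def)
  then show ?thesis unfolding q0_def .
qed

lemma descend:
  assumes p: "p \<in> topspace (pre_real k C)"
    and F: "\<And>a b. real_gen k C a b \<Longrightarrow> F a = F b"
  shows "F (SOME q. q \<in> real_class k C p) = F p"
proof -
  have "equivclp (real_gen k C) p (SOME q. q \<in> real_class k C p)" using some_rep[OF p] by blast
  then have "F p = F (SOME q. q \<in> real_class k C p)"
    by (induction rule: equivclp_induct) (use F in metis)+
  then show ?thesis by simp
qed

lemma pt_act_top: "a \<in> K \<Longrightarrow> p \<in> topspace (pre_real k C) \<Longrightarrow> pt_act k C a p \<in> topspace (pre_real k C)"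
  by (cases p) (auto simp: pt_act_eq pl_mdegs mdegsD uperm_msimplex psg_perm[OF K]
      intro: ss_carr'[OF C, of a "cid _", simplified] cid_cmors)

lemma pt_act_gen: assumes a: "a \<in> K" and g: "real_gen k C p q"
  shows "real_gen k C (pt_act k C a p) (pt_act k C a q)"
  using g[unfolded real_gen_def]
proof (elim disjE bexE conjE)
  fix f u x assume f: "f \<in> cmors k" and u: "u \<in> msimplex (ctgt f)" and x: "x \<in> carr C (csrc f)"
    and p: "p = (csrc f, cpush f u, x)" and q: "q = (ctgt f, u, fmap C (id, f) x)"
  have ap: "a permutes {..<k}" using psg_perm[OF K a] .
  have lens: "length (csrc f) = k" "length (ctgt f) = k" using f by (auto simp: cmors_def)
  let ?f = "cact a f" and ?u = "uperm k a u" and ?x = "fmap C (a, cid (csrc f)) x"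
  have f': "?f \<in> cmors k" using cact_cmors[OF ap f] .
  have u': "?u \<in> msimplex (ctgt ?f)" using uperm_msimplex[OF u lens(2) ap] by simp
  have x': "?x \<in> carr C (csrc ?f)" using ss_carr'[OF C a cid_cmors[OF csrc_mdegs[OF f]]] x by simp
  have e1: "pt_act k C a p = (csrc ?f, cpush ?f ?u, ?x)"
    using p by (simp add: pt_act_eq uperm_cpush[OF f ap])
  have "fmap C (id, ?f) ?x = fmap C (a, f) x" using ss_F2[OF K C a f x] by simp
  also have "\<dots> = fmap C (a, cid (ctgt f)) (fmap C (id, f) x)" using ss_F1[OF K C a f x] .
  finally have e2: "pt_act k C a q = (ctgt ?f, ?u, fmap C (id, ?f) ?x)"
    using q by (simp add: pt_act_eq)
  show ?thesis unfolding real_gen_def using f' u' x' e1 e2 by blast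
next
  fix n m u v assume n: "n \<in> mdegs k" and m: "m \<in> mdegs k" and u: "u \<in> msimplex n" and v: "v \<in> msimplex m"
    and p: "p = (n, u, bpt C n)" and q: "q = (m, v, bpt C m)"
  have ap: "a permutes {..<k}" using psg_perm[OF K a] .
  have b: "\<And>n. n \<in> mdegs k \<Longrightarrow> fmap C (a, cid n) (bpt C n) = bpt C (plist a n)"
    using ss_bpt_map[OF C] by (metis a cid_cmors gcod_simp gdom_simp cid_simps(1,2) gmorsI)
  have "pt_act k C a p = (plist a n, uperm k a u, bpt C (plist a n))" using p b[OF n] by (simp add: pt_act_eq)
  moreover have "pt_act k C a q = (plist a m, uperm k a v, bpt C (plist a m))" using q b[OF m] by (simp add: pt_act_eq)
  moreover have "uperm k a u \<in> msimplex (plist a n)" "uperm k a v \<in> msimplex (plist a m)"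
    using uperm_msimplex u v n m ap mdegsD by blast+
  ultimately show ?thesis unfolding real_gen_def using n m pl_mdegs by blast
qed

lemma real_act_class: assumes a: "a \<in> K" and p: "p \<in> topspace (pre_real k C)"
  shows "real_act k C a (real_class k C p) = real_class k C (pt_act k C a p)"
  unfolding real_act_def
  by (rule descend[OF p, of "\<lambda>q. real_class k C (pt_act k C a q)"]) (rule gen_class[OF pt_act_gen[OF a]])

lemma real_act_top: "a \<in> K \<Longrightarrow> x \<in> topspace (realization k C) \<Longrightarrow> real_act k C a x \<in> topspace (realization k C)"
  by (metis top_realE real_act_class class_top pt_act_top)

lemma pt_act_comp: assumes a: "a \<in> K" and b: "b \<in> K" and p: "p \<in> topspace (pre_real k C)"
  shows "pt_act k C a (pt_act k C b p) = pt_act k C (a \<circ> b) p"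
proof -
  obtain n u x where e: "p = (n, u, x)" "n \<in> mdegs k" "u \<in> msimplex n" "x \<in> carr C n" using class_cases[OF p] .
  show ?thesis using e ss_F3[OF K C a b e(2,4)] pl_comp[OF psg_perm[OF K a] psg_perm[OF K b] mdegsD[OF e(2)]]
      uperm_comp[OF psg_perm[OF K a] psg_perm[OF K b]]
    by (simp add: pt_act_eq)
qed

lemma real_act_comp: assumes a: "a \<in> K" and b: "b \<in> K" and x: "x \<in> topspace (realization k C)"
  shows "real_act k C a (real_act k C b x) = real_act k C (a \<circ> b) x"
proof -
  obtain p where p: "p \<in> topspace (pre_real k C)" "x = real_class k C p" using top_realE[OF x] .
  show ?thesis using p real_act_class[OF a] real_act_class[OF b] pt_act_top[OF b] pt_act_comp[OF a b]
      real_act_class[OF psg_comp[OF K a b]] by simp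
qed

lemma base_gen: "n \<in> mdegs k \<Longrightarrow> m \<in> mdegs k \<Longrightarrow> u \<in> msimplex n \<Longrightarrow> v \<in> msimplex m \<Longrightarrow>
  real_class k C (n, u, bpt C n) = real_class k C (m, v, bpt C m)"
  by (rule gen_class) (auto simp: real_gen_def)

lemma vertex0_ms: "vertex0 k \<in> msimplex (replicate k 0)"
  by (auto simp: msimplex_def vertex0_def)

lemma base_eq: "n \<in> mdegs k \<Longrightarrow> u \<in> msimplex n \<Longrightarrow> real_class k C (n, u, bpt C n) = real_base k C"
  unfolding real_base_def by (rule base_gen) (auto simp: vertex0_ms mdegs_def)

lemma base_top: "real_base k C \<in> topspace (realization k C)"
  unfolding real_base_def by (rule class_top) (auto simp: vertex0_ms mdegs_def ss_bpt[OF C])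

lemma real_act_base: assumes a: "a \<in> K" shows "real_act k C a (real_base k C) = real_base k C"
proof -
  let ?z = "replicate k 0"
  have z: "?z \<in> mdegs k" by (simp add: mdegs_def)
  have "real_act k C a (real_base k C) = real_class k C (pt_act k C a (?z, vertex0 k, bpt C ?z))"
    unfolding real_base_def by (rule real_act_class[OF a]) (simp add: z vertex0_ms ss_bpt[OF C z])
  also have "\<dots> = real_base k C"
  proof -
    have b: "fmap C (a, cid ?z) (bpt C ?z) = bpt C (plist a ?z)"
      using ss_bpt_map[OF C, of "(a, cid ?z)"] a by (simp add: gmorsI cid_cmors z)
    have "real_class k C (plist a ?z, uperm k a (vertex0 k), bpt C (plist a ?z)) = real_base k C"
      by (rule base_eq) (simp_all add: pl_mdegs z uperm_msimplex vertex0_ms psg_perm[OF K a])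
    then show ?thesis by (simp add: pt_act_eq b)
  qed
  finally show ?thesis .
qed

end


lemma nt_carr: "nat_trans k K C D s \<Longrightarrow> n \<in> mdegs k \<Longrightarrow> x \<in> carr C n \<Longrightarrow> s n x \<in> carr D n"
  by (auto simp: nat_trans_def)
lemma nt_bpt: "nat_trans k K C D s \<Longrightarrow> n \<in> mdegs k \<Longrightarrow> s n (bpt C n) = bpt D n"
  by (auto simp: nat_trans_def)
lemma nt_nat: "nat_trans k K C D s \<Longrightarrow> a \<in> K \<Longrightarrow> f \<in> cmors k \<Longrightarrow> x \<in> carr C (csrc f) \<Longrightarrow>
   s (plist a (ctgt f)) (fmap C (a, f) x) = fmap D (a, f) (s (csrc f) x)"
  unfolding nat_trans_def by (drule conjunct2, drule bspec[of _ _ "(a, f)"]) (auto simp: gmorsI)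

context
  fixes k K C D s
  assumes K: "perm_subgroup k K" and C: "is_ss k K C" and D: "is_ss k K D" and s: "nat_trans k K C D s"
begin

lemma rmap_gen: assumes g: "real_gen k C p q"
  shows "real_gen k D (fst p, fst (snd p), s (fst p) (snd (snd p))) (fst q, fst (snd q), s (fst q) (snd (snd q)))"
  using g[unfolded real_gen_def]
proof (elim disjE bexE conjE)
  fix f u x assume f: "f \<in> cmors k" and u: "u \<in> msimplex (ctgt f)" and x: "x \<in> carr C (csrc f)"
    and p: "p = (csrc f, cpush f u, x)" and q: "q = (ctgt f, u, fmap C (id, f) x)"
  have "s (ctgt f) (fmap C (id, f) x) = fmap D (id, f) (s (csrc f) x)"
    using nt_nat[OF s psg_id[OF K] f x] by simp
  moreover have sx: "s (csrc f) x \<in> carr D (csrc f)" using nt_carr[OF s csrc_mdegs[OF f] x] .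
  have "real_gen k D (csrc f, cpush f u, s (csrc f) x) (ctgt f, u, fmap D (id, f) (s (csrc f) x))"
    unfolding real_gen_def
    by (rule disjI1, rule bexI[of _ f], rule bexI[of _ u], rule bexI[of _ "s (csrc f) x"]) (use f u sx in simp_all)
  ultimately show ?thesis using p q by simp
next
  fix n m u v assume nm: "n \<in> mdegs k" "m \<in> mdegs k" "u \<in> msimplex n" "v \<in> msimplex m"
    and pq: "p = (n, u, bpt C n)" "q = (m, v, bpt C m)"
  have "real_gen k D (n, u, bpt D n) (m, v, bpt D m)"
    unfolding real_gen_def
    by (rule disjI2, rule bexI[of _ n], rule bexI[of _ m], rule bexI[of _ u], rule bexI[of _ v]) (use nm in simp_all)
  then show ?thesis using pq nt_bpt[OF s] nm by simp
qed

lemma real_map_class: assumes p: "(n, u, x) \<in> topspace (pre_real k C)"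
  shows "real_map k C D s (real_class k C (n, u, x)) = real_class k D (n, u, s n x)"
proof -
  have "real_map k C D s (real_class k C (n, u, x)) =
     (\<lambda>p. real_class k D (fst p, fst (snd p), s (fst p) (snd (snd p)))) (SOME q. q \<in> real_class k C (n, u, x))"
    by (simp add: real_map_def Let_def)
  also have "\<dots> = real_class k D (n, u, s n x)"
  proof -
    have "\<And>a b. real_gen k C a b \<Longrightarrow> real_class k D (fst a, fst (snd a), s (fst a) (snd (snd a))) =
       real_class k D (fst b, fst (snd b), s (fst b) (snd (snd b)))"
      by (rule gen_class[OF K D rmap_gen])
    from descend[OF K C p, of "\<lambda>p. real_class k D (fst p, fst (snd p), s (fst p) (snd (snd p)))", OF this]
    show ?thesis by simp
  qed
  finally show ?thesis .
qed

lemma real_map_top: assumes x: "x \<in> topspace (realization k C)"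
  shows "real_map k C D s x \<in> topspace (realization k D)"
proof -
  obtain p where p: "p \<in> topspace (pre_real k C)" "x = real_class k C p" using top_realE[OF K C x] .
  then show ?thesis using real_map_class nt_carr[OF s] class_top[OF K D] by (cases p) auto
qed

lemma real_map_base: "real_map k C D s (real_base k C) = real_base k D"
  unfolding real_base_def
  by (subst real_map_class) (auto simp: vertex0_ms[OF K C] mdegs_def ss_bpt[OF C] nt_bpt[OF s])

lemma real_map_act: assumes a: "a \<in> K" and x: "x \<in> topspace (realization k C)"
  shows "real_map k C D s (real_act k C a x) = real_act k D a (real_map k C D s x)"
proof -
  obtain p where p: "p \<in> topspace (pre_real k C)" "x = real_class k C p" using top_realE[OF K C x] .
  obtain n u y where e: "p = (n, u, y)" "n \<in> mdegs k" "u \<in> msimplex n" "y \<in> carr C n"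
    using class_cases[OF K C p(1)] .
  have sy: "s n y \<in> carr D n" using nt_carr[OF s e(2,4)] .
  have "real_map k C D s (real_act k C a x) = real_map k C D s (real_class k C (pt_act k C a p))"
    using real_act_class[OF K C a p(1)] p by simp
  also have "\<dots> = real_class k D (plist a n, uperm k a u, s (plist a n) (fmap C (a, cid n) y))"
    using e pt_act_top[OF K C a p(1)] by (simp add: pt_act_eq real_map_class)
  also have "s (plist a n) (fmap C (a, cid n) y) = fmap D (a, cid n) (s n y)"
    using nt_nat[OF s a cid_cmors[OF e(2)]] e(4) by simp
  also have "real_class k D (plist a n, uperm k a u, fmap D (a, cid n) (s n y)) =
      real_act k D a (real_class k D (n, u, s n y))"
    using real_act_class[OF K D a, of "(n, u, s n y)"] e sy by (simp add: pt_act_eq)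
  also have "real_class k D (n, u, s n y) = real_map k C D s x"
    using p e real_map_class by simp
  finally show ?thesis .
qed

end

lemma cid_inj: "cid n = cid m \<longleftrightarrow> n = m" by (metis cid_simps(1))

lemma pinv_l: "a permutes S \<Longrightarrow> inv a \<circ> a = id" by (rule permutes_inv_o(2))
lemma pinv_r: "a permutes S \<Longrightarrow> a \<circ> inv a = id" by (rule permutes_inv_o(1))

definition lvalid :: "nat \<Rightarrow> perm set \<Rightarrow> 'a ssobj \<Rightarrow> mdeg \<Rightarrow> gmor \<times> 'a \<Rightarrow> bool" where
  "lvalid k G A d p \<longleftrightarrow> (\<exists>g n a. p = ((g, cid n), a) \<and> g \<in> G \<and> n \<in> mdegs k \<and> a \<in> carr A n \<and> plist g n = d)"

definition lcond :: "nat \<Rightarrow> perm set \<Rightarrow> 'a ssobj \<Rightarrow> gmor \<times> 'a \<Rightarrow> gmor \<times> 'a \<Rightarrow> bool" where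
  "lcond k H A p q \<longleftrightarrow> (snd p = bpt A (csrc (snd (fst p))) \<and> snd q = bpt A (csrc (snd (fst q)))) \<or>
     (inv (fst (fst p)) \<circ> fst (fst q) \<in> H \<and>
      snd p = fmap A (inv (fst (fst p)) \<circ> fst (fst q), cid (csrc (snd (fst q)))) (snd q))"

definition lrel :: "nat \<Rightarrow> perm set \<Rightarrow> perm set \<Rightarrow> 'a ssobj \<Rightarrow> mdeg \<Rightarrow> ((gmor \<times> 'a) \<times> (gmor \<times> 'a)) set" where
  "lrel k H G A d = {(p, q). lvalid k G A d p \<and> lvalid k G A d q \<and> lcond k H A p q}"

definition lmapp :: "'a ssobj \<Rightarrow> gmor \<Rightarrow> gmor \<times> 'a \<Rightarrow> gmor \<times> 'a" where
  "lmapp A m p = ((fst m \<circ> fst (fst p), cid (plist (inv (fst (fst p))) (ctgt (snd m)))),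
      fmap A (id, cact (inv (fst (fst p))) (snd m)) (snd p))"

definition Lobj :: "nat \<Rightarrow> perm set \<Rightarrow> perm set \<Rightarrow> 'a ssobj \<Rightarrow> (gmor \<times> 'a) set ssobj" where
  "Lobj k H G A = \<lparr>carr = \<lambda>d. {p. lvalid k G A d p} // lrel k H G A d,
     bpt = \<lambda>d. lrel k H G A d `` {((id, cid d), bpt A d)},
     fmap = \<lambda>m c. lrel k H G A (gcod m) `` {lmapp A m (SOME p. p \<in> c)}\<rparr>"

definition etaL :: "nat \<Rightarrow> perm set \<Rightarrow> perm set \<Rightarrow> 'a ssobj \<Rightarrow> mdeg \<Rightarrow> 'a \<Rightarrow> (gmor \<times> 'a) set" where
  "etaL k H G A n a = lrel k H G A n `` {((id, cid n), a)}"

lemma lvalid_simp[simp]: "lvalid k G A d ((g, f), a) \<longleftrightarrow>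
   g \<in> G \<and> f = cid (csrc f) \<and> csrc f \<in> mdegs k \<and> a \<in> carr A (csrc f) \<and> plist g (csrc f) = d"
  unfolding lvalid_def by (auto simp: cid_inj)

lemma lvalid_cid[simp]: "lvalid k G A d ((g, cid n), a) \<longleftrightarrow> g \<in> G \<and> n \<in> mdegs k \<and> a \<in> carr A n \<and> plist g n = d"
  by simp

lemma lvalidE: assumes "lvalid k G A d p"
  obtains g n a where "p = ((g, cid n), a)" "g \<in> G" "n \<in> mdegs k" "a \<in> carr A n" "plist g n = d"
  using assms unfolding lvalid_def by blast

lemma lcond_simp[simp]: "lcond k H A ((g, cid n), a) ((g', cid n'), a') \<longleftrightarrow>
   (a = bpt A n \<and> a' = bpt A n') \<or> (inv g \<circ> g' \<in> H \<and> a = fmap A (inv g \<circ> g', cid n') a')"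
  by (simp add: lcond_def)

lemma lmapp_simp[simp]: "lmapp A (al, f) ((g, cid n), a) =
   ((al \<circ> g, cid (plist (inv g) (ctgt f))), fmap A (id, cact (inv g) f) a)"
  by (simp add: lmapp_def)

lemma lrel_iff: "(((g, cid n), a), ((g', cid n'), a')) \<in> lrel k H G A d \<longleftrightarrow>
   lvalid k G A d ((g, cid n), a) \<and> lvalid k G A d ((g', cid n'), a') \<and>
   ((a = bpt A n \<and> a' = bpt A n') \<or> (inv g \<circ> g' \<in> H \<and> a = fmap A (inv g \<circ> g', cid n') a'))"
  unfolding lrel_def by (simp only: lcond_simp mem_Collect_eq prod.case lvalid_cid)

lemma cact_ccomp: assumes a: "a permutes {..<k}" and f: "f \<in> cmors k" and g: "g \<in> cmors k"
  shows "cact a (ccomp f g) = ccomp (cact a f) (cact a g)"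
proof (rule cmor_eqI)
  have l: "length (ccomps f) = k" "length (ccomps g) = k" using f g by (auto simp: cmors_def)
  show "ccomps (cact a (ccomp f g)) = ccomps (ccomp (cact a f) (cact a g))"
    using l perm_inv_lt[OF a] by (auto intro!: nth_equalityI)
qed auto

context
  fixes k H G and A :: "'a ssobj"
  assumes G: "perm_subgroup k G" and H: "perm_subgroup k H" and HG: "H \<subseteq> G" and A: "is_ss k H A"
begin

lemma gperm: "g \<in> G \<Longrightarrow> g permutes {..<k}" using psg_perm[OF G] .

lemma bpt_act: "h \<in> H \<Longrightarrow> n \<in> mdegs k \<Longrightarrow> fmap A (h, cid n) (bpt A n) = bpt A (plist h n)"
  using ss_bpt_map[OF A, of "(h, cid n)"] by (simp add: gmorsI cid_cmors)

lemma bpt_map: "h \<in> H \<Longrightarrow> f \<in> cmors k \<Longrightarrow> fmap A (h, f) (bpt A (csrc f)) = bpt A (plist h (ctgt f))"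
  using ss_bpt_map[OF A, of "(h, f)"] by (simp add: gmorsI)

lemma deg_eq: assumes "g \<in> G" "g' \<in> G" "n \<in> mdegs k" "n' \<in> mdegs k" "plist g n = plist g' n'"
  shows "plist (inv g \<circ> g') n' = n"
proof -
  have "plist (inv g \<circ> g') n' = plist (inv g) (plist g' n')"
    using pl_comp[OF permutes_inv[OF gperm[OF assms(1)]] gperm[OF assms(2)] mdegsD[OF assms(4)]] by simp
  also have "\<dots> = n" using assms(5) pl_inv[OF gperm[OF assms(1)] mdegsD[OF assms(3)]] by simp
  finally show ?thesis .
qed

lemma lrel_equiv: "equiv {p. lvalid k G A d p} (lrel k H G A d)"
proof (rule equivI)
  show "lrel k H G A d \<subseteq> {p. lvalid k G A d p} \<times> {p. lvalid k G A d p}" by (auto simp: lrel_def)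
next
  show "refl_on {p. lvalid k G A d p} (lrel k H G A d)"
  proof (rule refl_onI)
    fix p assume "p \<in> {p. lvalid k G A d p}"
    then obtain g n a where p: "p = ((g, cid n), a)" "g \<in> G" "n \<in> mdegs k" "a \<in> carr A n" "plist g n = d"
      by (auto elim: lvalidE)
    then show "(p, p) \<in> lrel k H G A d"
      using ss_id[OF A p(3,4)] pinv_l[OF gperm[OF p(2)]] psg_id[OF H] by (simp add: lrel_iff)
  qed
next
  show "sym (lrel k H G A d)"
  proof (rule symI)
    fix p q assume pq: "(p, q) \<in> lrel k H G A d"
    then obtain g n a g' n' a' where p: "p = ((g, cid n), a)" "g \<in> G" "n \<in> mdegs k" "a \<in> carr A n" "plist g n = d"
      and q: "q = ((g', cid n'), a')" "g' \<in> G" "n' \<in> mdegs k" "a' \<in> carr A n'" "plist g' n' = d"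
      by (auto simp: lrel_def elim!: lvalidE)
    have c: "(a = bpt A n \<and> a' = bpt A n') \<or> (inv g \<circ> g' \<in> H \<and> a = fmap A (inv g \<circ> g', cid n') a')"
      using pq p q by (simp add: lrel_iff)
    have ii: "inv (inv g \<circ> g') = inv g' \<circ> g"
      using perm_inv_comp[OF permutes_inv[OF gperm[OF p(2)]] gperm[OF q(2)]]
        permutes_inv_inv[OF gperm[OF p(2)]] by simp
    have "(a' = bpt A n' \<and> a = bpt A n) \<or> (inv g' \<circ> g \<in> H \<and> a' = fmap A (inv g' \<circ> g, cid n) a)"
      using c
    proof
      assume c: "inv g \<circ> g' \<in> H \<and> a = fmap A (inv g \<circ> g', cid n') a'"
      have "fmap A (inv (inv g \<circ> g'), cid (plist (inv g \<circ> g') n')) (fmap A (inv g \<circ> g', cid n') a') = a'"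
        by (rule ss_inv[OF H A]) (use c q in auto)
      then show ?thesis using c ii deg_eq[OF p(2) q(2) p(3) q(3)] p(5) q(5) psg_inv[OF H, of "inv g \<circ> g'"] by auto
    qed auto
    then show "(q, p) \<in> lrel k H G A d" using p q by (simp add: lrel_iff)
  qed
next
  show "trans (lrel k H G A d)"
  proof (rule transI)
    fix p q r assume pq: "(p, q) \<in> lrel k H G A d" and qr: "(q, r) \<in> lrel k H G A d"
    then obtain g n a g' n' a' g'' n'' a'' where p: "p = ((g, cid n), a)" "g \<in> G" "n \<in> mdegs k" "a \<in> carr A n" "plist g n = d"
      and q: "q = ((g', cid n'), a')" "g' \<in> G" "n' \<in> mdegs k" "a' \<in> carr A n'" "plist g' n' = d"
      and r: "r = ((g'', cid n''), a'')" "g'' \<in> G" "n'' \<in> mdegs k" "a'' \<in> carr A n''" "plist g'' n'' = d"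
      by (auto simp: lrel_def elim!: lvalidE)
    have c1: "(a = bpt A n \<and> a' = bpt A n') \<or> (inv g \<circ> g' \<in> H \<and> a = fmap A (inv g \<circ> g', cid n') a')"
      using pq p q by (simp add: lrel_iff)
    have c2: "(a' = bpt A n' \<and> a'' = bpt A n'') \<or> (inv g' \<circ> g'' \<in> H \<and> a' = fmap A (inv g' \<circ> g'', cid n'') a'')"
      using qr q r by (simp add: lrel_iff)
    have d1: "plist (inv g \<circ> g') n' = n" using deg_eq[OF p(2) q(2) p(3) q(3)] p(5) q(5) by simp
    have d2: "plist (inv g' \<circ> g'') n'' = n'" using deg_eq[OF q(2) r(2) q(3) r(3)] q(5) r(5) by simp
    have gg: "(inv g \<circ> g') \<circ> (inv g' \<circ> g'') = inv g \<circ> g''"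
      using pinv_r[OF gperm[OF q(2)]] by (simp add: o_assoc) (metis comp_id o_assoc)
    have bp1: "a'' = bpt A n''" if h: "inv g' \<circ> g'' \<in> H" and e: "fmap A (inv g' \<circ> g'', cid n'') a'' = bpt A n'" for dummy :: unit
    proof -
      have "a'' = fmap A (inv (inv g' \<circ> g''), cid n') (fmap A (inv g' \<circ> g'', cid n'') a'')"
        using ss_inv[OF H A h r(3,4)] d2 by simp
      also have "\<dots> = bpt A (plist (inv (inv g' \<circ> g'')) n')"
        using e bpt_act[OF psg_inv[OF H h] q(3)] by simp
      also have "plist (inv (inv g' \<circ> g'')) n' = n''"
        using d2 pl_inv[OF psg_perm[OF H h] mdegsD[OF r(3)]] by auto
      finally show ?thesis .
    qed
    have "(a = bpt A n \<and> a'' = bpt A n'') \<or> (inv g \<circ> g'' \<in> H \<and> a = fmap A (inv g \<circ> g'', cid n'') a'')"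
    proof (cases "a' = bpt A n'")
      case True
      then have a: "a = bpt A n" using c1 bpt_act[OF _ q(3)] d1 by auto
      have "a'' = bpt A n''" using c2 True bp1 by auto
      then show ?thesis using a by simp
    next
      case False
      then have h1: "inv g \<circ> g' \<in> H" "a = fmap A (inv g \<circ> g', cid n') a'"
        and h2: "inv g' \<circ> g'' \<in> H" "a' = fmap A (inv g' \<circ> g'', cid n'') a''" using c1 c2 by auto
      have "a = fmap A ((inv g \<circ> g') \<circ> (inv g' \<circ> g''), cid n'') a''"
        using h1 h2 ss_F3[OF H A h1(1) h2(1) r(3,4)] d2 by simp
      then show ?thesis using gg psg_comp[OF H h1(1) h2(1)] by simp
    qed
    then show "(p, r) \<in> lrel k H G A d" using p r by (simp add: lrel_iff)
  qed
qed


lemma lmapp_valid: assumes m: "(al, f) \<in> gmors k G" and p: "lvalid k G A (csrc f) p"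
  shows "lvalid k G A (plist al (ctgt f)) (lmapp A (al, f) p)"
proof -
  obtain g n a where pe: "p = ((g, cid n), a)" "g \<in> G" "n \<in> mdegs k" "a \<in> carr A n" "plist g n = csrc f"
    using p by (auto elim: lvalidE)
  have al: "al \<in> G" and f: "f \<in> cmors k" using m by (auto simp: gmors_def)
  have gp: "g permutes {..<k}" using gperm[OF pe(2)] .
  have lf: "length (csrc f) = k" "length (ctgt f) = k" using f by (auto simp: cmors_def)
  have src: "csrc (cact (inv g) f) = n" using pe(5) pl_inv[OF gp mdegsD[OF pe(3)]] by simp
  have "fmap A (id, cact (inv g) f) a \<in> carr A (plist id (ctgt (cact (inv g) f)))"
    by (rule ss_carr'[OF A psg_id[OF H] cact_cmors[OF permutes_inv[OF gp] f]]) (use src pe in simp)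
  moreover have "plist (al \<circ> g) (plist (inv g) (ctgt f)) = plist al (ctgt f)"
    using pl_comp[OF gperm[OF al] gp, of "plist (inv g) (ctgt f)"] pl_inv2[OF gp lf(2)] lf by simp
  ultimately show ?thesis using pe psg_comp[OF G al pe(2)] lf by (simp add: mdegsI)
qed

lemma lmapp_resp: assumes m: "(al, f) \<in> gmors k G" and pq: "(p, q) \<in> lrel k H G A (csrc f)"
  shows "(lmapp A (al, f) p, lmapp A (al, f) q) \<in> lrel k H G A (plist al (ctgt f))"
proof -
  obtain g n a g' n' a' where p: "p = ((g, cid n), a)" "g \<in> G" "n \<in> mdegs k" "a \<in> carr A n" "plist g n = csrc f"
      and q: "q = ((g', cid n'), a')" "g' \<in> G" "n' \<in> mdegs k" "a' \<in> carr A n'" "plist g' n' = csrc f"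
    using pq by (auto simp: lrel_def elim!: lvalidE)
  have al: "al \<in> G" and f: "f \<in> cmors k" using m by (auto simp: gmors_def)
  have gp: "g permutes {..<k}" and gp': "g' permutes {..<k}" using gperm p(2) q(2) by auto
  have alp: "al permutes {..<k}" using gperm[OF al] .
  have c: "(a = bpt A n \<and> a' = bpt A n') \<or> (inv g \<circ> g' \<in> H \<and> a = fmap A (inv g \<circ> g', cid n') a')"
    using pq p q by (simp add: lrel_iff)
  have src: "csrc (cact (inv g) f) = n" using p(5) pl_inv[OF gp mdegsD[OF p(3)]] by simp
  have src': "csrc (cact (inv g') f) = n'" using q(5) pl_inv[OF gp' mdegsD[OF q(3)]] by simp
  have hh: "inv (al \<circ> g) \<circ> (al \<circ> g') = inv g \<circ> g'"
    using perm_inv_comp[OF alp gp] pinv_l[OF alp] by (simp add: o_assoc) (metis comp_id o_assoc)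
  have "(fmap A (id, cact (inv g) f) a = bpt A (plist (inv g) (ctgt f)) \<and>
         fmap A (id, cact (inv g') f) a' = bpt A (plist (inv g') (ctgt f))) \<or>
        (inv g \<circ> g' \<in> H \<and> fmap A (id, cact (inv g) f) a =
           fmap A (inv g \<circ> g', cid (plist (inv g') (ctgt f))) (fmap A (id, cact (inv g') f) a'))"
    using c
  proof
    assume "a = bpt A n \<and> a' = bpt A n'"
    then show ?thesis
      using bpt_map[OF psg_id[OF H] cact_cmors[OF permutes_inv[OF gp] f]]
        bpt_map[OF psg_id[OF H] cact_cmors[OF permutes_inv[OF gp'] f]] src src' by simp
  next
    assume c: "inv g \<circ> g' \<in> H \<and> a = fmap A (inv g \<circ> g', cid n') a'"
    let ?h = "inv g \<circ> g'" and ?x = "cact (inv g') f"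
    have x: "?x \<in> cmors k" using cact_cmors[OF permutes_inv[OF gp'] f] .
    have a': "a' \<in> carr A (csrc ?x)" using src' q by simp
    have "cact ?h ?x = cact (inv g) f"
    proof -
      have "cact ?h ?x = cact (?h \<circ> inv g') f"
        using cact_comp[OF psg_perm[OF H] permutes_inv[OF gp'] f] c by simp
      moreover have "?h \<circ> inv g' = inv g" using pinv_r[OF gp'] by (metis comp_id o_assoc)
      ultimately show ?thesis by simp
    qed
    then have "fmap A (id, cact (inv g) f) a = fmap A (?h, ?x) a'"
      using ss_F2[OF H A _ x a'] c src' by simp
    also have "\<dots> = fmap A (?h, cid (plist (inv g') (ctgt f))) (fmap A (id, ?x) a')"
      using ss_F1[OF H A _ x a'] c by simp
    finally show ?thesis using c by simp
  qed
  moreover have "lvalid k G A (plist al (ctgt f)) (lmapp A (al, f) p)"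
    by (rule lmapp_valid[OF m]) (use pq in \<open>simp add: lrel_def\<close>)
  moreover have "lvalid k G A (plist al (ctgt f)) (lmapp A (al, f) q)"
    by (rule lmapp_valid[OF m]) (use pq in \<open>simp add: lrel_def\<close>)
  ultimately show ?thesis unfolding p(1) q(1) lmapp_simp lrel_iff hh by blast
qed

end

lemma L_simps[simp]: "carr (Lobj k H G A) d = {p. lvalid k G A d p} // lrel k H G A d"
  "bpt (Lobj k H G A) d = lrel k H G A d `` {((id, cid d), bpt A d)}"
  "fmap (Lobj k H G A) m c = lrel k H G A (gcod m) `` {lmapp A m (SOME p. p \<in> c)}"
  by (simp_all add: Lobj_def)

context
  fixes k H G and A :: "'a ssobj"
  assumes G: "perm_subgroup k G" and H: "perm_subgroup k H" and HG: "H \<subseteq> G" and A: "is_ss k H A"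
begin

lemma Lfmap_class: assumes m: "(al, f) \<in> gmors k G" and p: "lvalid k G A (csrc f) p"
  shows "fmap (Lobj k H G A) (al, f) (lrel k H G A (csrc f) `` {p}) = lrel k H G A (plist al (ctgt f)) `` {lmapp A (al, f) p}"
proof -
  define q where "q = (SOME q. q \<in> lrel k H G A (csrc f) `` {p})"
  have "p \<in> lrel k H G A (csrc f) `` {p}" using equiv_class_self[OF lrel_equiv[OF G H HG A]] p by simp
  then have "q \<in> lrel k H G A (csrc f) `` {p}" unfolding q_def by (rule someI)
  then have "(p, q) \<in> lrel k H G A (csrc f)" by simp
  then have "(lmapp A (al, f) p, lmapp A (al, f) q) \<in> lrel k H G A (plist al (ctgt f))"
    by (rule lmapp_resp[OF G H HG A m])
  then have "lrel k H G A (plist al (ctgt f)) `` {lmapp A (al, f) q} = lrel k H G A (plist al (ctgt f)) `` {lmapp A (al, f) p}"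
    using equiv_class_eq[OF lrel_equiv[OF G H HG A]] by metis
  then show ?thesis by (simp add: q_def)
qed

lemma lmapp_comp: assumes m1: "(al, f) \<in> gmors k G" and m2: "(be, f2) \<in> gmors k G"
    and d: "csrc f = plist be (ctgt f2)" and p: "lvalid k G A (csrc f2) p"
  shows "lmapp A (al, f) (lmapp A (be, f2) p) = lmapp A (gcomp (al, f) (be, f2)) p"
proof -
  obtain g n a where pe: "p = ((g, cid n), a)" "g \<in> G" "n \<in> mdegs k" "a \<in> carr A n" "plist g n = csrc f2"
    using p by (auto elim: lvalidE)
  have al: "al \<in> G" and f: "f \<in> cmors k" and be: "be \<in> G" and f2: "f2 \<in> cmors k"
    using m1 m2 by (auto simp: gmors_def)
  have gp: "g permutes {..<k}" and bp: "be permutes {..<k}" using psg_perm[OF G] pe(2) be by auto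
  have lf: "length (ctgt f) = k" "length (ctgt f2) = k" "length (csrc f2) = k" using f f2 by (auto simp: cmors_def)
  have ib: "inv (be \<circ> g) = inv g \<circ> inv be" using perm_inv_comp[OF bp gp] .
  let ?c1 = "cact (inv (be \<circ> g)) f" and ?c2 = "cact (inv g) f2"
  have c1: "?c1 \<in> cmors k" using cact_cmors[OF permutes_inv[OF permutes_compose[OF gp bp]] f] .
  have c2: "?c2 \<in> cmors k" using cact_cmors[OF permutes_inv[OF gp] f2] .
  have e1: "cact (inv g) (ccomp (cact (inv be) f) f2) = ccomp ?c1 ?c2"
    using cact_ccomp[OF permutes_inv[OF gp] cact_cmors[OF permutes_inv[OF bp] f] f2]
      cact_comp[OF permutes_inv[OF gp] permutes_inv[OF bp] f] ib by simp
  have deg: "plist (inv g) (plist (inv be) (ctgt f)) = plist (inv (be \<circ> g)) (ctgt f)"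
    using pl_comp[OF permutes_inv[OF gp] permutes_inv[OF bp] lf(1)] ib by simp
  have src: "csrc ?c1 = ctgt ?c2"
    using d ib pl_comp[OF permutes_inv[OF gp] permutes_inv[OF bp], of "plist be (ctgt f2)"]
      pl_inv[OF bp lf(2)] lf by simp
  have asrc: "a \<in> carr A (csrc ?c2)" using pe pl_inv[OF gp lf(3)] by simp (metis pl_inv[OF gp] mdegsD)
  have "fmap A (id, ccomp ?c1 ?c2) a = fmap A (id, ?c1) (fmap A (id, ?c2) a)"
    using ss_comp[OF A, of "(id, ?c1)" "(id, ?c2)" a] src asrc c1 c2 psg_id[OF H]
    by (simp add: gmorsI gcomp_simp)
  then show ?thesis using pe(1) e1 deg by (simp add: gcomp_simp o_assoc)
qed

lemma L_ss: "is_ss k G (Lobj k H G A)"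
  unfolding is_ss_def
proof (intro conjI ballI impI allI)
  fix n assume n: "n \<in> mdegs k"
  show "bpt (Lobj k H G A) n \<in> carr (Lobj k H G A) n"
    using n psg_id[OF G] ss_bpt[OF A n] by (simp add: quotientI)
next
  fix m x assume m: "m \<in> gmors k G" and x: "x \<in> carr (Lobj k H G A) (gdom m)"
  obtain al f where mf: "m = (al, f)" by (cases m) blast
  obtain p where p: "lvalid k G A (csrc f) p" "x = lrel k H G A (csrc f) `` {p}" using x mf by (auto elim: quotientE)
  show "fmap (Lobj k H G A) m x \<in> carr (Lobj k H G A) (gcod m)"
    using Lfmap_class[OF m[unfolded mf] p(1)] p(2) lmapp_valid[OF G H HG A m[unfolded mf] p(1)] mf
    by (simp del: L_simps(3)) (simp add: quotientI)
next
  fix m assume m: "m \<in> gmors k G"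
  obtain al f where mf: "m = (al, f)" by (cases m) blast
  have al: "al \<in> G" and f: "f \<in> cmors k" using m mf by (auto simp: gmors_def)
  have v: "lvalid k G A (csrc f) ((id, cid (csrc f)), bpt A (csrc f))"
    using psg_id[OF G] ss_bpt[OF A csrc_mdegs[OF f]] csrc_mdegs[OF f] by simp
  have "fmap (Lobj k H G A) m (bpt (Lobj k H G A) (gdom m)) =
     lrel k H G A (plist al (ctgt f)) `` {((al, cid (ctgt f)), fmap A (id, f) (bpt A (csrc f)))}"
    using Lfmap_class[OF m[unfolded mf] v] mf by (simp del: L_simps(3) add: L_simps(2))
  also have "fmap A (id, f) (bpt A (csrc f)) = bpt A (ctgt f)"
    using bpt_map[OF G H HG A psg_id[OF H] f] by simp
  also have "lrel k H G A (plist al (ctgt f)) `` {((al, cid (ctgt f)), bpt A (ctgt f))} =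
      lrel k H G A (plist al (ctgt f)) `` {((id, cid (plist al (ctgt f))), bpt A (plist al (ctgt f)))}"
  proof (rule equiv_class_eq[OF lrel_equiv[OF G H HG A]])
    show "(((al, cid (ctgt f)), bpt A (ctgt f)), ((id, cid (plist al (ctgt f))), bpt A (plist al (ctgt f))))
       \<in> lrel k H G A (plist al (ctgt f))"
      using al psg_id[OF G] ss_bpt[OF A] ctgt_mdegs[OF f] pl_mdegs[OF ctgt_mdegs[OF f]]
      by (simp add: lrel_iff)
  qed
  finally show "fmap (Lobj k H G A) m (bpt (Lobj k H G A) (gdom m)) = bpt (Lobj k H G A) (gcod m)"
    using mf by simp
next
  fix n x assume n: "n \<in> mdegs k" and x: "x \<in> carr (Lobj k H G A) n"
  obtain p where p: "lvalid k G A n p" "x = lrel k H G A n `` {p}" using x by (auto elim: quotientE)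
  obtain g n0 a where pe: "p = ((g, cid n0), a)" "g \<in> G" "n0 \<in> mdegs k" "a \<in> carr A n0" "plist g n0 = n"
    using p(1) by (auto elim: lvalidE)
  have gp: "g permutes {..<k}" using psg_perm[OF G pe(2)] .
  have i: "plist (inv g) n = n0" using pe(5) pl_inv[OF gp mdegsD[OF pe(3)]] by simp
  have "lmapp A (id, cid n) p = p"
    using pe i cact_cid[OF permutes_inv[OF gp], of n] mdegsD[OF n] ss_id[OF A pe(3,4)] by simp
  then show "fmap (Lobj k H G A) (gid n) x = x"
    using Lfmap_class[of id "cid n" p] p gid_eq psg_id[OF G] cid_cmors[OF n]
    by (simp del: L_simps(3) add: gmorsI)
next
  fix m1 m2 x assume m1: "m1 \<in> gmors k G" and m2: "m2 \<in> gmors k G" and d: "gdom m1 = gcod m2"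
    and x: "x \<in> carr (Lobj k H G A) (gdom m2)"
  obtain al f where mf: "m1 = (al, f)" by (cases m1) blast
  obtain be f2 where mf2: "m2 = (be, f2)" by (cases m2) blast
  have al: "al \<in> G" and f: "f \<in> cmors k" and be: "be \<in> G" and f2: "f2 \<in> cmors k"
    using m1 m2 mf mf2 by (auto simp: gmors_def)
  have bp: "be permutes {..<k}" using psg_perm[OF G be] .
  have dd: "csrc f = plist be (ctgt f2)" using d mf mf2 by simp
  obtain p where p: "lvalid k G A (csrc f2) p" "x = lrel k H G A (csrc f2) `` {p}" using x mf2 by (auto elim: quotientE)
  have v2: "lvalid k G A (csrc f) (lmapp A (be, f2) p)"
    using lmapp_valid[OF G H HG A m2[unfolded mf2] p(1)] dd by simp
  have rhs: "fmap (Lobj k H G A) m1 (fmap (Lobj k H G A) m2 x) =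
     lrel k H G A (plist al (ctgt f)) `` {lmapp A (al, f) (lmapp A (be, f2) p)}"
    using Lfmap_class[OF m2[unfolded mf2] p(1)] Lfmap_class[OF m1[unfolded mf] v2] p(2) mf mf2 dd
    by (simp del: L_simps(3))
  have gc: "gcod (gcomp m1 m2) = plist al (ctgt f)"
  proof -
    have "gcod (gcomp m1 m2) = plist (al \<circ> be) (plist (inv be) (ctgt f))"
      using mf mf2 by (simp add: gcomp_simp)
    also have "\<dots> = plist al (ctgt f)"
      using pl_comp[OF psg_perm[OF G al] bp, of "plist (inv be) (ctgt f)"] pl_inv2[OF bp, of "ctgt f"] f
      by (simp add: cmors_def)
    finally show ?thesis .
  qed
  define q where "q = (SOME q. q \<in> x)"
  have "p \<in> x" using equiv_class_self[OF lrel_equiv[OF G H HG A]] p by simp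
  then have "q \<in> x" unfolding q_def by (rule someI)
  then have pq: "(p, q) \<in> lrel k H G A (csrc f2)" using p by simp
  have q1: "lvalid k G A (csrc f2) q" using pq by (simp add: lrel_def)
  have "(lmapp A (al, f) (lmapp A (be, f2) p), lmapp A (al, f) (lmapp A (be, f2) q)) \<in> lrel k H G A (plist al (ctgt f))"
    using lmapp_resp[OF G H HG A m1[unfolded mf]] lmapp_resp[OF G H HG A m2[unfolded mf2] pq] dd by simp
  then have "lrel k H G A (plist al (ctgt f)) `` {lmapp A (al, f) (lmapp A (be, f2) q)} =
     lrel k H G A (plist al (ctgt f)) `` {lmapp A (al, f) (lmapp A (be, f2) p)}"
    using equiv_class_eq[OF lrel_equiv[OF G H HG A]] by metis
  moreover have "lmapp A (al, f) (lmapp A (be, f2) q) = lmapp A (gcomp m1 m2) q"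
    using lmapp_comp[OF m1[unfolded mf] m2[unfolded mf2] dd q1] mf mf2 by simp
  ultimately show "fmap (Lobj k H G A) (gcomp m1 m2) x = fmap (Lobj k H G A) m1 (fmap (Lobj k H G A) m2 x)"
    using rhs gc by (simp add: q_def)
qed

end

definition tauf :: "'b ssobj \<Rightarrow> (mdeg \<Rightarrow> 'a \<Rightarrow> 'b) \<Rightarrow> gmor \<times> 'a \<Rightarrow> 'b" where
  "tauf B eta p = fmap B (fst (fst p), cid (csrc (snd (fst p)))) (eta (csrc (snd (fst p))) (snd p))"

lemma tauf_simp[simp]: "tauf B eta ((g, cid n), a) = fmap B (g, cid n) (eta n a)"
  by (simp add: tauf_def)

definition taut :: "'b ssobj \<Rightarrow> (mdeg \<Rightarrow> 'a \<Rightarrow> 'b) \<Rightarrow> mdeg \<Rightarrow> (gmor \<times> 'a) set \<Rightarrow> 'b" where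
  "taut B eta d c = tauf B eta (SOME p. p \<in> c)"

lemma nat_trans_comp: assumes "nat_trans k K C D s" "nat_trans k K D E t"
  shows "nat_trans k K C E (\<lambda>n x. t n (s n x))"
  unfolding nat_trans_def
proof (intro conjI ballI)
  fix n assume n: "n \<in> mdegs k"
  show "(\<lambda>x. t n (s n x)) ` carr C n \<subseteq> carr E n"
    using nt_carr[OF assms(2) n] nt_carr[OF assms(1) n] by auto
  show "t n (s n (bpt C n)) = bpt E n" using assms n by (auto simp: nat_trans_def)
next
  fix m x assume m: "m \<in> gmors k K" and x: "x \<in> carr C (gdom m)"
  have d: "gdom m \<in> mdegs k" using m by (cases m) (auto simp: gmors_def csrc_mdegs)
  have sx: "s (gdom m) x \<in> carr D (gdom m)" using assms(1) d x by (auto simp: nat_trans_def)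
  have "s (gcod m) (fmap C m x) = fmap D m (s (gdom m) x)" using assms(1) m x by (simp add: nat_trans_def)
  moreover have "t (gcod m) (fmap D m (s (gdom m) x)) = fmap E m (t (gdom m) (s (gdom m) x))"
    using assms(2) m sx by (simp add: nat_trans_def)
  ultimately show "t (gcod m) (s (gcod m) (fmap C m x)) = fmap E m (t (gdom m) (s (gdom m) x))" by simp
qed

lemma nat_trans_idt: "is_ss k K C \<Longrightarrow> nat_trans k K C C (\<lambda>n x. x)"
  unfolding nat_trans_def by auto

context
  fixes k H G and A :: "'a ssobj" and B :: "(gmor \<times> 'a) set ssobj" and eta
  assumes G: "perm_subgroup k G" and H: "perm_subgroup k H" and HG: "H \<subseteq> G" and A: "is_ss k H A"
    and lan: "is_lan k H G A B eta"
begin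

lemma B8: "is_ss k G B" using lan by (simp add: is_lan_def)
lemma BH8: "is_ss k H B" using ss_mono[OF B8 HG] .
lemma eta8: "nat_trans k H A B eta" using lan by (simp add: is_lan_def)

lemma etaL_nt: "nat_trans k H A (Lobj k H G A) (etaL k H G A)"
  unfolding nat_trans_def
proof (intro conjI ballI)
  fix n assume n: "n \<in> mdegs k"
  show "etaL k H G A n ` carr A n \<subseteq> carr (Lobj k H G A) n"
    using n psg_id[OF G] by (auto simp: etaL_def intro!: quotientI)
  show "etaL k H G A n (bpt A n) = bpt (Lobj k H G A) n" by (simp add: etaL_def)
next
  fix m x assume m: "m \<in> gmors k H" and x: "x \<in> carr A (gdom m)"
  obtain h f where mf: "m = (h, f)" by (cases m) blast
  have h: "h \<in> H" and f: "f \<in> cmors k" using m mf by (auto simp: gmors_def)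
  have hG: "h \<in> G" using h HG by auto
  have mG: "(h, f) \<in> gmors k G" using hG f by (simp add: gmorsI)
  have xv: "lvalid k G A (csrc f) ((id, cid (csrc f)), x)"
    using x mf psg_id[OF G] csrc_mdegs[OF f] by simp
  have "fmap (Lobj k H G A) m (etaL k H G A (gdom m) x) =
      lrel k H G A (plist h (ctgt f)) `` {((h, cid (ctgt f)), fmap A (id, f) x)}"
    using Lfmap_class[OF G H HG A mG xv] mf by (simp add: etaL_def del: L_simps(3))
  also have "\<dots> = lrel k H G A (plist h (ctgt f)) `` {((id, cid (plist h (ctgt f))), fmap A (h, f) x)}"
  proof (rule sym, rule equiv_class_eq[OF lrel_equiv[OF G H HG A]])
    have ax: "fmap A (id, f) x \<in> carr A (ctgt f)" using ss_carr'[OF A psg_id[OF H] f] x mf by simp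
    have ax2: "fmap A (h, f) x \<in> carr A (plist h (ctgt f))" using ss_carr'[OF A h f] x mf by simp
    have "fmap A (h, f) x = fmap A (h, cid (ctgt f)) (fmap A (id, f) x)"
      using ss_F1[OF H A h f] x mf by simp
    then show "(((id, cid (plist h (ctgt f))), fmap A (h, f) x), ((h, cid (ctgt f)), fmap A (id, f) x))
      \<in> lrel k H G A (plist h (ctgt f))"
      using ax ax2 hG h psg_id[OF G] ctgt_mdegs[OF f] pl_mdegs[OF ctgt_mdegs[OF f]]
      by (simp add: lrel_iff)
  qed
  finally show "etaL k H G A (gcod m) (fmap A m x) = fmap (Lobj k H G A) m (etaL k H G A (gdom m) x)"
    using mf by (simp add: etaL_def)
qed


lemma tauf_resp: assumes pq: "(p, q) \<in> lrel k H G A d" shows "tauf B eta p = tauf B eta q"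
proof -
  obtain g n a g' n' a' where p: "p = ((g, cid n), a)" "g \<in> G" "n \<in> mdegs k" "a \<in> carr A n" "plist g n = d"
      and q: "q = ((g', cid n'), a')" "g' \<in> G" "n' \<in> mdegs k" "a' \<in> carr A n'" "plist g' n' = d"
    using pq by (auto simp: lrel_def elim!: lvalidE)
  have c: "(a = bpt A n \<and> a' = bpt A n') \<or> (inv g \<circ> g' \<in> H \<and> a = fmap A (inv g \<circ> g', cid n') a')"
    using pq p q by (simp add: lrel_iff)
  have gp: "g permutes {..<k}" using psg_perm[OF G p(2)] .
  have bb: "\<And>g n. g \<in> G \<Longrightarrow> n \<in> mdegs k \<Longrightarrow> fmap B (g, cid n) (bpt B n) = bpt B (plist g n)"
  proof -
    fix g n assume "g \<in> G" "n \<in> mdegs k"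
    then show "fmap B (g, cid n) (bpt B n) = bpt B (plist g n)"
      using ss_bpt_map[OF B8, of "(g, cid n)"] by (simp add: gmorsI cid_cmors)
  qed
  show ?thesis using c
  proof
    assume "a = bpt A n \<and> a' = bpt A n'"
    then show ?thesis using p q nt_bpt[OF eta8] bb by simp
  next
    assume c: "inv g \<circ> g' \<in> H \<and> a = fmap A (inv g \<circ> g', cid n') a'"
    let ?h = "inv g \<circ> g'"
    have hn: "plist ?h n' = n" using deg_eq[OF G H HG A p(2) q(2) p(3) q(3)] p(5) q(5) by simp
    have "eta n a = fmap B (?h, cid n') (eta n' a')"
      using nt_nat[OF eta8 _ cid_cmors[OF q(3)], of ?h a'] c q hn by simp
    moreover have "fmap B (g, cid (plist ?h n')) (fmap B (?h, cid n') (eta n' a')) = fmap B (g \<circ> ?h, cid n') (eta n' a')"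
      by (rule ss_F3[OF G B8 p(2) _ q(3) nt_carr[OF eta8 q(3,4)]]) (use c HG in blast)
    ultimately have "fmap B (g, cid n) (eta n a) = fmap B (g \<circ> ?h, cid n') (eta n' a')"
      using hn by simp
    moreover have "g \<circ> ?h = g'" using pinv_r[OF gp] by (simp add: o_assoc)
    ultimately show ?thesis using p q by simp
  qed
qed

lemma taut_class: assumes p: "lvalid k G A d p" shows "taut B eta d (lrel k H G A d `` {p}) = tauf B eta p"
proof -
  define q where "q = (SOME q. q \<in> lrel k H G A d `` {p})"
  have "p \<in> lrel k H G A d `` {p}" using equiv_class_self[OF lrel_equiv[OF G H HG A]] p by simp
  then have "q \<in> lrel k H G A d `` {p}" unfolding q_def by (rule someI)
  then have "(p, q) \<in> lrel k H G A d" by simp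
  then have "tauf B eta p = tauf B eta q" by (rule tauf_resp)
  then show ?thesis unfolding taut_def q_def by simp
qed

lemma tauf_carr: assumes p: "lvalid k G A d p" shows "tauf B eta p \<in> carr B d"
proof -
  obtain g n a where pe: "p = ((g, cid n), a)" "g \<in> G" "n \<in> mdegs k" "a \<in> carr A n" "plist g n = d"
    using p by (auto elim: lvalidE)
  show ?thesis using ss_carr'[OF B8 pe(2) cid_cmors[OF pe(3)]] nt_carr[OF eta8 pe(3,4)] pe by simp
qed

lemma tau_nt: "nat_trans k G (Lobj k H G A) B (taut B eta)"
  unfolding nat_trans_def
proof (intro conjI ballI)
  fix n assume n: "n \<in> mdegs k"
  show "taut B eta n ` carr (Lobj k H G A) n \<subseteq> carr B n"
    using taut_class tauf_carr by (auto elim!: quotientE)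
  have v: "lvalid k G A n ((id, cid n), bpt A n)" using n psg_id[OF G] ss_bpt[OF A n] by simp
  show "taut B eta n (bpt (Lobj k H G A) n) = bpt B n"
    using taut_class[OF v] ss_id[OF B8 n] ss_bpt[OF B8 n] nt_bpt[OF eta8 n] by simp
next
  fix m x assume m: "m \<in> gmors k G" and x: "x \<in> carr (Lobj k H G A) (gdom m)"
  obtain al f where mf: "m = (al, f)" by (cases m) blast
  have al: "al \<in> G" and f: "f \<in> cmors k" using m mf by (auto simp: gmors_def)
  obtain p where p: "lvalid k G A (csrc f) p" "x = lrel k H G A (csrc f) `` {p}" using x mf by (auto elim: quotientE)
  obtain g n a where pe: "p = ((g, cid n), a)" "g \<in> G" "n \<in> mdegs k" "a \<in> carr A n" "plist g n = csrc f"
    using p by (auto elim: lvalidE)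
  have gp: "g permutes {..<k}" using psg_perm[OF G pe(2)] .
  let ?c = "cact (inv g) f"
  have c: "?c \<in> cmors k" using cact_cmors[OF permutes_inv[OF gp] f] .
  have src: "csrc ?c = n" using pe(5) pl_inv[OF gp mdegsD[OF pe(3)]] by simp
  have ea: "eta n a \<in> carr B (csrc ?c)" using nt_carr[OF eta8 pe(3,4)] src by simp
  have v2: "lvalid k G A (plist al (ctgt f)) (lmapp A (al, f) p)" using lmapp_valid[OF G H HG A m[unfolded mf] p(1)] .
  have "taut B eta (gcod m) (fmap (Lobj k H G A) m x) = tauf B eta (lmapp A (al, f) p)"
    using Lfmap_class[OF G H HG A m[unfolded mf] p(1)] p(2) mf taut_class[OF v2] by (simp del: L_simps(3))
  also have "\<dots> = fmap B (al \<circ> g, cid (ctgt ?c)) (eta (ctgt ?c) (fmap A (id, ?c) a))"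
    using pe by simp
  also have "eta (ctgt ?c) (fmap A (id, ?c) a) = fmap B (id, ?c) (eta n a)"
    using nt_nat[OF eta8 psg_id[OF H] c, of a] pe src by simp
  also have "fmap B (al \<circ> g, cid (ctgt ?c)) (fmap B (id, ?c) (eta n a)) = fmap B (al \<circ> g, ?c) (eta n a)"
    using ss_F1[OF G B8 psg_comp[OF G al pe(2)] c ea] by simp
  also have "\<dots> = fmap B (gcomp (al, f) (g, cid n)) (eta n a)"
    using gcomp4[OF gp f] src by simp
  also have "\<dots> = fmap B (al, f) (fmap B (g, cid n) (eta n a))"
    using ss_comp[OF B8, of "(al, f)" "(g, cid n)" "eta n a"] al f pe nt_carr[OF eta8 pe(3,4)]
    by (simp add: gmorsI cid_cmors)
  also have "fmap B (g, cid n) (eta n a) = taut B eta (gdom m) x"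
    using taut_class[OF p(1)] p(2) pe mf by simp
  finally show "taut B eta (gcod m) (fmap (Lobj k H G A) m x) = fmap B m (taut B eta (gdom m) x)"
    using mf by simp
qed

lemma tau_eta: "n \<in> mdegs k \<Longrightarrow> a \<in> carr A n \<Longrightarrow> taut B eta n (etaL k H G A n a) = eta n a"
  unfolding etaL_def using psg_id[OF G] ss_id[OF B8 _ nt_carr[OF eta8]]
  by (subst taut_class) simp_all

definition "sig = (SOME s. nat_trans k G B (Lobj k H G A) s \<and>
       (\<forall>n\<in>mdegs k. \<forall>x\<in>carr A n. s n (eta n x) = etaL k H G A n x))"

lemma sig: "nat_trans k G B (Lobj k H G A) sig \<and> (\<forall>n\<in>mdegs k. \<forall>x\<in>carr A n. sig n (eta n x) = etaL k H G A n x)"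
proof -
  have "\<exists>s. nat_trans k G B (Lobj k H G A) s \<and> (\<forall>n\<in>mdegs k. \<forall>x\<in>carr A n. s n (eta n x) = etaL k H G A n x)"
    using lan L_ss[OF G H HG A] etaL_nt unfolding is_lan_def by blast
  then show ?thesis unfolding sig_def by (rule someI_ex)
qed

lemma sig_tau: assumes p: "lvalid k G A d p" shows "sig d (tauf B eta p) = lrel k H G A d `` {p}"
proof -
  obtain g n a where pe: "p = ((g, cid n), a)" "g \<in> G" "n \<in> mdegs k" "a \<in> carr A n" "plist g n = d"
    using p by (auto elim: lvalidE)
  have "sig d (tauf B eta p) = fmap (Lobj k H G A) (g, cid n) (sig n (eta n a))"
    using nt_nat[OF conjunct1[OF sig] pe(2) cid_cmors[OF pe(3)]] nt_carr[OF eta8 pe(3,4)] pe by simp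
  also have "\<dots> = fmap (Lobj k H G A) (g, cid n) (lrel k H G A n `` {((id, cid n), a)})"
    using sig pe by (simp add: etaL_def del: L_simps(3))
  also have "\<dots> = lrel k H G A d `` {p}"
    using Lfmap_class[OF G H HG A, of g "cid n" "((id, cid n), a)"] pe psg_id[OF G] ss_id[OF A pe(3,4)]
    by (simp add: gmorsI cid_cmors del: L_simps(3))
  finally show ?thesis .
qed

lemma tau_sig: assumes n: "n \<in> mdegs k" and b: "b \<in> carr B n" shows "taut B eta n (sig n b) = b"
proof -
  obtain s0 where s0: "nat_trans k G B B s0"
    "\<forall>s'. nat_trans k G B B s' \<and> (\<forall>n\<in>mdegs k. \<forall>x\<in>carr A n. s' n (eta n x) = eta n x) \<longrightarrow>
         (\<forall>n\<in>mdegs k. \<forall>y\<in>carr B n. s' n y = s0 n y)"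
    using lan B8 eta8 unfolding is_lan_def by blast
  have "nat_trans k G B B (\<lambda>n y. taut B eta n (sig n y))"
    by (rule nat_trans_comp[OF conjunct1[OF sig] tau_nt])
  moreover have "\<forall>n\<in>mdegs k. \<forall>x\<in>carr A n. taut B eta n (sig n (eta n x)) = eta n x"
    using sig tau_eta by simp
  ultimately have 1: "taut B eta n (sig n b) = s0 n b" using s0(2) n b by blast
  have "(\<lambda>n y. y) n b = s0 n b" using s0(2) nat_trans_idt[OF B8] n b by blast
  then show ?thesis using 1 by simp
qed

lemma R1: assumes n: "d \<in> mdegs k" and b: "b \<in> carr B d"
  obtains g m a where "g \<in> G" "m \<in> mdegs k" "a \<in> carr A m" "plist g m = d" "b = fmap B (g, cid m) (eta m a)"
proof -
  have "sig d b \<in> carr (Lobj k H G A) d" using nt_carr[OF conjunct1[OF sig] n b] .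
  then obtain p where p: "lvalid k G A d p" "sig d b = lrel k H G A d `` {p}" by (auto elim: quotientE)
  then have "b = tauf B eta p" using tau_sig[OF n b] taut_class[OF p(1)] by simp
  then show ?thesis using p(1) that by (auto elim!: lvalidE)
qed

lemma R2: assumes p: "lvalid k G A d p" and q: "lvalid k G A d q" and e: "tauf B eta p = tauf B eta q"
  shows "(p, q) \<in> lrel k H G A d"
proof -
  have "lrel k H G A d `` {p} = lrel k H G A d `` {q}" using sig_tau[OF p] sig_tau[OF q] e by simp
  then show ?thesis using eq_equiv_class_iff[OF lrel_equiv[OF G H HG A]] p q by blast
qed

end

lemma top_smash_pre: "topspace (smash_pre k G A) = G \<times> topspace (realization k A)"
  by (simp add: smash_pre_def)

context
  fixes k H G and A :: "'a ssobj"
  assumes G: "perm_subgroup k G" and H: "perm_subgroup k H" and HG: "H \<subseteq> G" and A: "is_ss k H A"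
begin

lemma smash_gen_top: "smash_gen k H G A p q \<Longrightarrow> p \<in> topspace (smash_pre k G A) \<and> q \<in> topspace (smash_pre k G A)"
  unfolding smash_gen_def top_smash_pre
  using psg_comp[OF G] HG real_act_top[OF H A] base_top[OF H A] by blast

lemma smash_equiv: "equiv (topspace (smash_pre k G A)) (smash_rel k H G A)"
  unfolding equiv_def refl_on_def sym_def trans_def smash_rel_def
  by (auto intro: equivclp_sym equivclp_trans)

lemma smash_class_eq: "p \<in> topspace (smash_pre k G A) \<Longrightarrow> q \<in> topspace (smash_pre k G A) \<Longrightarrow>
   smash_class k H G A p = smash_class k H G A q \<longleftrightarrow> equivclp (smash_gen k H G A) p q"
  unfolding smash_class_def using eq_equiv_class_iff[OF smash_equiv] by (simp add: smash_rel_def)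

lemma smash_gen_class: "smash_gen k H G A p q \<Longrightarrow> smash_class k H G A p = smash_class k H G A q"
  using smash_gen_top smash_class_eq by (meson equivclp_into_equivclp equivclp_refl)

lemma smash_class_mem: "p \<in> topspace (smash_pre k G A) \<Longrightarrow> p \<in> smash_class k H G A p"
  unfolding smash_class_def using equiv_class_self[OF smash_equiv] by blast

lemma top_smash: "topspace (smash k H G A) = topspace (smash_pre k G A) // smash_rel k H G A"
  unfolding smash_def using quot_top_space[OF smash_equiv] .

lemma smash_class_top: "p \<in> topspace (smash_pre k G A) \<Longrightarrow> smash_class k H G A p \<in> topspace (smash k H G A)"
  unfolding top_smash smash_class_def by (rule quotientI)

lemma smash_quot: "quotient_map (smash_pre k G A) (smash k H G A) (smash_class k H G A)"
  using quot_top_map[OF smash_equiv] unfolding smash_def smash_class_def .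

lemma top_smashE: assumes "y \<in> topspace (smash k H G A)"
  obtains p where "p \<in> topspace (smash_pre k G A)" "y = smash_class k H G A p"
  using assms unfolding top_smash smash_class_def by (auto elim: quotientE)

lemma smash_descend:
  assumes p: "p \<in> topspace (smash_pre k G A)"
    and F: "\<And>a b. smash_gen k H G A a b \<Longrightarrow> F a = F b"
  shows "F (SOME q. q \<in> smash_class k H G A p) = F p"
proof -
  define q0 where "q0 = (SOME q. q \<in> smash_class k H G A p)"
  have "q0 \<in> smash_class k H G A p" unfolding q0_def using smash_class_mem[OF p] by (rule someI)
  then have "equivclp (smash_gen k H G A) p q0" by (simp add: smash_class_def smash_rel_def)
  then have "F p = F q0"
    by (induction rule: equivclp_induct) (use F in metis)+
  then show ?thesis unfolding q0_def by simp
qed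

lemma smash_act_class: assumes al: "al \<in> G" and p: "p \<in> topspace (smash_pre k G A)"
  shows "smash_act k H G A al (smash_class k H G A p) = smash_class k H G A (al \<circ> fst p, snd p)"
proof -
  have "\<And>a b. smash_gen k H G A a b \<Longrightarrow> smash_class k H G A (al \<circ> fst a, snd a) = smash_class k H G A (al \<circ> fst b, snd b)"
  proof -
    fix a b assume ab: "smash_gen k H G A a b"
    have "smash_gen k H G A (al \<circ> fst a, snd a) (al \<circ> fst b, snd b)"
      using ab unfolding smash_gen_def
    proof (elim disjE bexE conjE)
      fix g h x assume "g \<in> G" "h \<in> H" "x \<in> topspace (realization k A)" "a = (g \<circ> h, x)" "b = (g, real_act k A h x)"
      note gh = this
      show "(\<exists>g\<in>G. \<exists>h\<in>H. \<exists>x\<in>topspace (realization k A). (al \<circ> fst a, snd a) = (g \<circ> h, x) \<and> (al \<circ> fst b, snd b) = (g, real_act k A h x)) \<or>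
          (\<exists>g\<in>G. \<exists>g'\<in>G. (al \<circ> fst a, snd a) = (g, real_base k A) \<and> (al \<circ> fst b, snd b) = (g', real_base k A))"
        by (rule disjI1, rule bexI[of _ "al \<circ> g"], rule bexI[of _ h], rule bexI[of _ x])
           (use psg_comp[OF G al] gh in \<open>auto simp: o_assoc\<close>)
    next
      fix g g' assume "g \<in> G" "g' \<in> G" "a = (g, real_base k A)" "b = (g', real_base k A)"
      then show "(\<exists>g\<in>G. \<exists>h\<in>H. \<exists>x\<in>topspace (realization k A). (al \<circ> fst a, snd a) = (g \<circ> h, x) \<and> (al \<circ> fst b, snd b) = (g, real_act k A h x)) \<or>
          (\<exists>g\<in>G. \<exists>g'\<in>G. (al \<circ> fst a, snd a) = (g, real_base k A) \<and> (al \<circ> fst b, snd b) = (g', real_base k A))"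
        using psg_comp[OF G al] by (intro disjI2) auto
    qed
    then show "smash_class k H G A (al \<circ> fst a, snd a) = smash_class k H G A (al \<circ> fst b, snd b)"
      by (rule smash_gen_class)
  qed
  from smash_descend[OF p, of "\<lambda>q. smash_class k H G A (al \<circ> fst q, snd q)", OF this]
  show ?thesis by (simp add: smash_act_def Let_def)
qed

end

context
  fixes k H G and A :: "'a ssobj" and B :: "(gmor \<times> 'a) set ssobj" and eta
  assumes G: "perm_subgroup k G" and H: "perm_subgroup k H" and HG: "H \<subseteq> G" and A: "is_ss k H A"
    and lan: "is_lan k H G A B eta"
begin

definition "isrep d b t \<longleftrightarrow> fst t \<in> G \<and> fst (snd t) \<in> mdegs k \<and> snd (snd t) \<in> carr A (fst (snd t)) \<and>
   plist (fst t) (fst (snd t)) = d \<and> b = fmap B (fst t, cid (fst (snd t))) (eta (fst (snd t)) (snd (snd t)))"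

definition "brep d b = (SOME t. isrep d b t)"

definition "Sm t u = smash_class k H G A (fst t, real_class k A (fst (snd t), uperm k (inv (fst t)) u, snd (snd t)))"

definition "Fp p = Sm (brep (fst p) (snd (snd p))) (fst (snd p))"

definition "Phi x = Fp (SOME p. p \<in> x)"

definition "Psi y = (let q = SOME q. q \<in> y in real_act k B (fst q) (real_map k A B eta (snd q)))"

lemma isrep_simp: "isrep d b (g, m, a) \<longleftrightarrow> g \<in> G \<and> m \<in> mdegs k \<and> a \<in> carr A m \<and> plist g m = d \<and>
   b = fmap B (g, cid m) (eta m a)" by (simp add: isrep_def)

lemma Sm_simp: "Sm (g, m, a) u = smash_class k H G A (g, real_class k A (m, uperm k (inv g) u, a))"
  by (simp add: Sm_def)

lemma brep: assumes n: "n \<in> mdegs k" and b: "b \<in> carr B n" shows "isrep n b (brep n b)"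
proof -
  obtain g m a where "g \<in> G" "m \<in> mdegs k" "a \<in> carr A m" "plist g m = n" "b = fmap B (g, cid m) (eta m a)"
    using R1[OF G H HG A lan n b] .
  then have "isrep n b (g, m, a)" by (simp add: isrep_simp)
  then show ?thesis unfolding brep_def by (rule someI)
qed

lemma rc_top: "m \<in> mdegs k \<Longrightarrow> v \<in> msimplex m \<Longrightarrow> a \<in> carr A m \<Longrightarrow> real_class k A (m, v, a) \<in> topspace (realization k A)"
  by (rule class_top[OF H A]) simp

lemma F_indep: assumes t: "isrep n b (g, m, a)" and t': "isrep n b (g', m', a')" and u: "u \<in> msimplex n"
  shows "Sm (g, m, a) u = Sm (g', m', a') u"
proof -
  have g: "g \<in> G" "m \<in> mdegs k" "a \<in> carr A m" "plist g m = n" and bb: "b = fmap B (g, cid m) (eta m a)"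
    using t by (auto simp: isrep_simp)
  have g': "g' \<in> G" "m' \<in> mdegs k" "a' \<in> carr A m'" "plist g' m' = n" and bb': "b = fmap B (g', cid m') (eta m' a')"
    using t' by (auto simp: isrep_simp)
  have gp: "g permutes {..<k}" and gp': "g' permutes {..<k}" using psg_perm[OF G] g g' by auto
  have nl: "length n = k" using g(4) mdegsD[OF g(2)] by auto
  have u1: "uperm k (inv g) u \<in> msimplex m" using uperm_msimplex[OF u nl permutes_inv[OF gp]] g(4) pl_inv[OF gp mdegsD[OF g(2)]] by simp
  have u2: "uperm k (inv g') u \<in> msimplex m'" using uperm_msimplex[OF u nl permutes_inv[OF gp']] g'(4) pl_inv[OF gp' mdegsD[OF g'(2)]] by simp
  have "(((g, cid m), a), ((g', cid m'), a')) \<in> lrel k H G A n"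
    by (rule R2[OF G H HG A lan]) (use g g' bb bb' in simp_all)
  then have c: "(a = bpt A m \<and> a' = bpt A m') \<or> (inv g \<circ> g' \<in> H \<and> a = fmap A (inv g \<circ> g', cid m') a')"
    by (simp add: lrel_iff)
  then show ?thesis
  proof
    assume bp: "a = bpt A m \<and> a' = bpt A m'"
    have "Sm (g, m, a) u = smash_class k H G A (g, real_base k A)"
      using base_eq[OF H A g(2) u1] bp by (simp add: Sm_simp)
    also have "\<dots> = smash_class k H G A (g', real_base k A)"
      by (rule smash_gen_class[OF G H HG A]) (use g g' in \<open>auto simp: smash_gen_def\<close>)
    also have "\<dots> = Sm (g', m', a') u"
      using base_eq[OF H A g'(2) u2] bp by (simp add: Sm_simp)
    finally show ?thesis .
  next
    assume c: "inv g \<circ> g' \<in> H \<and> a = fmap A (inv g \<circ> g', cid m') a'"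
    let ?h = "inv g \<circ> g'"
    have h: "?h \<in> H" using c by simp
    have gh: "g \<circ> ?h = g'" using pinv_r[OF gp] by (simp add: o_assoc)
    have hm: "plist ?h m' = m" using deg_eq[OF G H HG A g(1) g'(1) g(2) g'(2)] g(4) g'(4) by simp
    have uu: "uperm k ?h (uperm k (inv g') u) = uperm k (inv g) u"
    proof -
      have "uperm k ?h (uperm k (inv g') u) = uperm k (?h \<circ> inv g') u"
        using uperm_comp[OF psg_perm[OF H h] permutes_inv[OF gp']] .
      moreover have "?h \<circ> inv g' = inv g" using pinv_r[OF gp'] by (simp add: o_assoc[symmetric])
      ultimately show ?thesis by simp
    qed
    let ?x = "real_class k A (m', uperm k (inv g') u, a')"
    have x: "?x \<in> topspace (realization k A)" using rc_top[OF g'(2) u2 g'(3)] .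
    have "Sm (g', m', a') u = smash_class k H G A (g \<circ> ?h, ?x)" using gh by (simp add: Sm_simp)
    also have "\<dots> = smash_class k H G A (g, real_act k A ?h ?x)"
      by (rule smash_gen_class[OF G H HG A]) (use g(1) h x in \<open>auto simp: smash_gen_def\<close>)
    also have "real_act k A ?h ?x = real_class k A (pt_act k A ?h (m', uperm k (inv g') u, a'))"
      by (rule real_act_class[OF H A h]) (use g' u2 in simp)
    also have "\<dots> = real_class k A (m, uperm k (inv g) u, a)"
      using hm uu c by (simp add: pt_act_eq)
    finally show ?thesis by (simp add: Sm_simp)
  qed
qed

lemma F_rep: assumes n: "n \<in> mdegs k" and b: "b \<in> carr B n" and t: "isrep n b t" and u: "u \<in> msimplex n"
  shows "Fp (n, u, b) = Sm t u"
proof -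
  obtain g m a where t1: "t = (g, m, a)" by (cases t) auto
  obtain g' m' a' where t2: "brep n b = (g', m', a')" by (cases "brep n b") auto
  show ?thesis unfolding Fp_def using F_indep[of n b g' m' a' g m a u] brep[OF n b] t t1 t2 u by simp
qed


lemma B: "is_ss k G B" using lan by (simp add: is_lan_def)
lemma BH: "is_ss k H B" using ss_mono[OF B HG] .
lemma eta: "nat_trans k H A B eta" using lan by (simp add: is_lan_def)

lemma bpt_rep: "n \<in> mdegs k \<Longrightarrow> isrep n (bpt B n) (id, n, bpt A n)"
  using psg_id[OF G] ss_bpt[OF A] nt_bpt[OF eta] ss_id[OF B _ ss_bpt[OF B]] by (simp add: isrep_simp)

lemma Fp_gen: assumes gpq: "real_gen k B p q" shows "Fp p = Fp q"
  using gpq[unfolded real_gen_def]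
proof (elim disjE bexE conjE)
  fix f u b assume f: "f \<in> cmors k" and u: "u \<in> msimplex (ctgt f)" and b: "b \<in> carr B (csrc f)"
    and p: "p = (csrc f, cpush f u, b)" and q: "q = (ctgt f, u, fmap B (id, f) b)"
  have s: "csrc f \<in> mdegs k" and t: "ctgt f \<in> mdegs k" using f csrc_mdegs ctgt_mdegs by auto
  obtain g m a where r: "brep (csrc f) b = (g, m, a)" by (cases "brep (csrc f) b") auto
  have g: "g \<in> G" "m \<in> mdegs k" "a \<in> carr A m" "plist g m = csrc f" and bb: "b = fmap B (g, cid m) (eta m a)"
    using brep[OF s b] r by (auto simp: isrep_simp)
  have gp: "g permutes {..<k}" using psg_perm[OF G g(1)] .
  let ?c = "cact (inv g) f"
  have c: "?c \<in> cmors k" using cact_cmors[OF permutes_inv[OF gp] f] .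
  have src: "csrc ?c = m" using g(4) pl_inv[OF gp mdegsD[OF g(2)]] by simp
  have lt: "length (ctgt f) = k" using t mdegsD by auto
  have tgt: "plist g (ctgt ?c) = ctgt f" using pl_inv2[OF gp lt] by simp
  have ea: "eta m a \<in> carr B (csrc ?c)" using nt_carr[OF eta g(2,3)] src by simp
  have aa: "a \<in> carr A (csrc ?c)" using g(3) src by simp
  have "fmap B (id, f) b = fmap B (gcomp (id, f) (g, cid m)) (eta m a)"
    using ss_comp[OF B, of "(id, f)" "(g, cid m)" "eta m a"] bb f g psg_id[OF G] nt_carr[OF eta g(2,3)]
    by (simp add: gmorsI cid_cmors)
  also have "gcomp (id, f) (g, cid m) = (g, ?c)" using gcomp4[OF gp f] g(4) src by simp
  also have "fmap B (g, ?c) (eta m a) = fmap B (g, cid (ctgt ?c)) (fmap B (id, ?c) (eta m a))"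
    using ss_F1[OF G B g(1) c ea] by simp
  also have "fmap B (id, ?c) (eta m a) = eta (ctgt ?c) (fmap A (id, ?c) a)"
    using nt_nat[OF eta psg_id[OF H] c aa] src by simp
  finally have eqb: "fmap B (id, f) b = fmap B (g, cid (ctgt ?c)) (eta (ctgt ?c) (fmap A (id, ?c) a))" .
  have rq: "isrep (ctgt f) (fmap B (id, f) b) (g, ctgt ?c, fmap A (id, ?c) a)"
    unfolding isrep_simp using eqb g(1) ctgt_mdegs[OF c] ss_carr'[OF A psg_id[OF H] c aa] tgt by simp
  have uu: "uperm k (inv g) (cpush f u) = cpush ?c (uperm k (inv g) u)"
    using uperm_cpush[OF f permutes_inv[OF gp]] .
  have u': "uperm k (inv g) u \<in> msimplex (ctgt ?c)" using uperm_msimplex[OF u lt permutes_inv[OF gp]] by simp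
  have "Fp p = Sm (g, m, a) (cpush f u)"
    using F_rep[OF s b brep[OF s b] cpush_msimplex[OF f u]] r p by simp
  also have "\<dots> = smash_class k H G A (g, real_class k A (csrc ?c, cpush ?c (uperm k (inv g) u), a))"
    using uu src by (simp add: Sm_simp)
  also have "real_class k A (csrc ?c, cpush ?c (uperm k (inv g) u), a) =
      real_class k A (ctgt ?c, uperm k (inv g) u, fmap A (id, ?c) a)"
    by (rule gen_class[OF H A], unfold real_gen_def, rule disjI1, rule bexI[of _ ?c],
        rule bexI[of _ "uperm k (inv g) u"], rule bexI[of _ a]) (use c u' aa in simp_all)
  also have "smash_class k H G A (g, real_class k A (ctgt ?c, uperm k (inv g) u, fmap A (id, ?c) a)) = Fp q"
    using F_rep[OF t ss_carr'[OF B psg_id[OF G] f b, simplified] rq u] q by (simp add: Sm_simp)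
  finally show ?thesis .
next
  fix n m u v assume nm: "n \<in> mdegs k" "m \<in> mdegs k" "u \<in> msimplex n" "v \<in> msimplex m"
    and pq: "p = (n, u, bpt B n)" "q = (m, v, bpt B m)"
  have "Fp p = smash_class k H G A (id, real_base k A)"
    using F_rep[OF nm(1) ss_bpt[OF B nm(1)] bpt_rep[OF nm(1)] nm(3)] pq base_eq[OF H A nm(1)]
      uperm_msimplex[OF nm(3) mdegsD[OF nm(1)] permutes_inv[OF permutes_id]]
    by (simp add: Sm_simp)
  moreover have "Fp q = smash_class k H G A (id, real_base k A)"
    using F_rep[OF nm(2) ss_bpt[OF B nm(2)] bpt_rep[OF nm(2)] nm(4)] pq base_eq[OF H A nm(2)]
      uperm_msimplex[OF nm(4) mdegsD[OF nm(2)] permutes_inv[OF permutes_id]]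
    by (simp add: Sm_simp)
  ultimately show ?thesis by simp
qed

lemma Phi_class: assumes p: "p \<in> topspace (pre_real k B)" shows "Phi (real_class k B p) = Fp p"
  unfolding Phi_def using descend[OF G B p, of Fp, OF Fp_gen] .

lemma Psi_class: assumes g: "g \<in> G" and x: "x \<in> topspace (realization k A)"
  shows "Psi (smash_class k H G A (g, x)) = real_act k B g (real_map k A B eta x)"
proof -
  have p: "(g, x) \<in> topspace (smash_pre k G A)" using g x by (simp add: top_smash_pre)
  have "\<And>a b. smash_gen k H G A a b \<Longrightarrow> real_act k B (fst a) (real_map k A B eta (snd a)) =
       real_act k B (fst b) (real_map k A B eta (snd b))"
  proof -
    fix a b assume "smash_gen k H G A a b"
    then show "real_act k B (fst a) (real_map k A B eta (snd a)) = real_act k B (fst b) (real_map k A B eta (snd b))"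
      unfolding smash_gen_def
    proof (elim disjE bexE conjE)
      fix g h x assume gh: "g \<in> G" "h \<in> H" "x \<in> topspace (realization k A)" "a = (g \<circ> h, x)" "b = (g, real_act k A h x)"
      have hG: "h \<in> G" using gh HG by auto
      have mx: "real_map k A B eta x \<in> topspace (realization k B)" using real_map_top[OF H A BH eta gh(3)] .
      have "real_act k B (g \<circ> h) (real_map k A B eta x) = real_act k B g (real_act k B h (real_map k A B eta x))"
        using real_act_comp[OF G B gh(1) hG mx] by simp
      also have "real_act k B h (real_map k A B eta x) = real_map k A B eta (real_act k A h x)"
        using real_map_act[OF H A BH eta gh(2,3)] by simp
      finally have calc: "real_act k B (g \<circ> h) (real_map k A B eta x) = real_act k B g (real_map k A B eta (real_act k A h x))" .
      show ?thesis by (simp only: gh(4) gh(5) fst_conv snd_conv) (rule calc)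
    next
      fix g g' assume "g \<in> G" "g' \<in> G" "a = (g, real_base k A)" "b = (g', real_base k A)"
      then show ?thesis using real_map_base[OF H A BH eta] real_act_base[OF G B] by simp
    qed
  qed
  from smash_descend[OF G H HG A p, of "\<lambda>q. real_act k B (fst q) (real_map k A B eta (snd q))", OF this]
  show ?thesis by (simp add: Psi_def Let_def smash_class_def)
qed


lemma smash_elem: assumes y: "y \<in> topspace (smash k H G A)"
  obtains g m v a where "g \<in> G" "m \<in> mdegs k" "v \<in> msimplex m" "a \<in> carr A m"
    "y = smash_class k H G A (g, real_class k A (m, v, a))"
proof -
  obtain p where p: "p \<in> topspace (smash_pre k G A)" "y = smash_class k H G A p" using top_smashE[OF G H HG A y] .
  obtain g x where gx: "p = (g, x)" "g \<in> G" "x \<in> topspace (realization k A)" using p(1) by (auto simp: top_smash_pre)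
  obtain q where q: "q \<in> topspace (pre_real k A)" "x = real_class k A q" using top_realE[OF H A gx(3)] .
  obtain m v a where "q = (m, v, a)" "m \<in> mdegs k" "v \<in> msimplex m" "a \<in> carr A m" using class_cases[OF H A q(1)] .
  then show ?thesis using that p gx q by blast
qed

lemma realB_elem: assumes x: "x \<in> topspace (realization k B)"
  obtains n u b where "n \<in> mdegs k" "u \<in> msimplex n" "b \<in> carr B n" "x = real_class k B (n, u, b)"
proof -
  obtain q where q: "q \<in> topspace (pre_real k B)" "x = real_class k B q" using top_realE[OF G B x] .
  obtain n u b where "q = (n, u, b)" "n \<in> mdegs k" "u \<in> msimplex n" "b \<in> carr B n" using class_cases[OF G B q(1)] .
  then show ?thesis using that q by blast
qed

lemma Psi_formula: assumes g: "g \<in> G" and m: "m \<in> mdegs k" and v: "v \<in> msimplex m" and a: "a \<in> carr A m"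
  shows "Psi (smash_class k H G A (g, real_class k A (m, v, a))) =
     real_class k B (plist g m, uperm k g v, fmap B (g, cid m) (eta m a))"
proof -
  have "Psi (smash_class k H G A (g, real_class k A (m, v, a))) = real_act k B g (real_map k A B eta (real_class k A (m, v, a)))"
    by (rule Psi_class[OF g rc_top[OF m v a]])
  also have "real_map k A B eta (real_class k A (m, v, a)) = real_class k B (m, v, eta m a)"
    by (rule real_map_class[OF H A BH eta]) (use m v a in simp)
  also have "real_act k B g \<dots> = real_class k B (pt_act k B g (m, v, eta m a))"
    by (rule real_act_class[OF G B g]) (use m v nt_carr[OF eta m a] in simp)
  finally show ?thesis by (simp add: pt_act_eq)
qed

lemma Phi_Psi: assumes y: "y \<in> topspace (smash k H G A)" shows "Phi (Psi y) = y"
proof -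
  obtain g m v a where e: "g \<in> G" "m \<in> mdegs k" "v \<in> msimplex m" "a \<in> carr A m"
    "y = smash_class k H G A (g, real_class k A (m, v, a))" using smash_elem[OF y] .
  have gp: "g permutes {..<k}" using psg_perm[OF G e(1)] .
  have gm: "plist g m \<in> mdegs k" using pl_mdegs[OF e(2)] .
  have bb: "fmap B (g, cid m) (eta m a) \<in> carr B (plist g m)"
    using ss_carr'[OF B e(1) cid_cmors[OF e(2)]] nt_carr[OF eta e(2,4)] by simp
  have uv: "uperm k g v \<in> msimplex (plist g m)" using uperm_msimplex[OF e(3) mdegsD[OF e(2)] gp] .
  have "Phi (Psi y) = Fp (plist g m, uperm k g v, fmap B (g, cid m) (eta m a))"
    using Psi_formula[OF e(1-4)] e(5) Phi_class gm uv bb by simp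
  also have "\<dots> = Sm (g, m, a) (uperm k g v)"
    by (rule F_rep[OF gm bb _ uv]) (use e in \<open>simp add: isrep_simp\<close>)
  also have "\<dots> = y" using e uperm_inv[OF e(3) mdegsD[OF e(2)] gp] by (simp add: Sm_simp)
  finally show ?thesis .
qed

lemma Phi_formula: assumes n: "n \<in> mdegs k" and u: "u \<in> msimplex n" and b: "b \<in> carr B n"
    and t: "isrep n b (g, m, a)"
  shows "Phi (real_class k B (n, u, b)) = smash_class k H G A (g, real_class k A (m, uperm k (inv g) u, a))"
  using Phi_class[of "(n, u, b)"] F_rep[OF n b t u] n u b by (simp add: Sm_simp)

lemma rep_facts: assumes n: "n \<in> mdegs k" and u: "u \<in> msimplex n" and t: "isrep n b (g, m, a)"
  shows "g \<in> G" "m \<in> mdegs k" "a \<in> carr A m" "uperm k (inv g) u \<in> msimplex m"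
    "uperm k g (uperm k (inv g) u) = u"
proof -
  show g: "g \<in> G" "m \<in> mdegs k" "a \<in> carr A m" using t by (auto simp: isrep_simp)
  have gp: "g permutes {..<k}" using psg_perm[OF G g(1)] .
  have pm: "plist g m = n" using t by (simp add: isrep_simp)
  show "uperm k (inv g) u \<in> msimplex m"
    using uperm_msimplex[OF u mdegsD[OF n] permutes_inv[OF gp]] pm pl_inv[OF gp mdegsD[OF g(2)]] by simp
  show "uperm k g (uperm k (inv g) u) = u"
    using uperm_inv[OF u mdegsD[OF n] permutes_inv[OF gp]] permutes_inv_inv[OF gp] by simp
qed

lemma Psi_Phi: assumes x: "x \<in> topspace (realization k B)" shows "Psi (Phi x) = x"
proof -
  obtain n u b where e: "n \<in> mdegs k" "u \<in> msimplex n" "b \<in> carr B n" "x = real_class k B (n, u, b)"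
    using realB_elem[OF x] .
  obtain g m a where r: "brep n b = (g, m, a)" by (cases "brep n b") auto
  have t: "isrep n b (g, m, a)" using brep[OF e(1,3)] r by simp
  note rf = rep_facts[OF e(1,2) t]
  have "Psi (Phi x) = Psi (smash_class k H G A (g, real_class k A (m, uperm k (inv g) u, a)))"
    using Phi_formula[OF e(1-3) t] e(4) by simp
  also have "\<dots> = real_class k B (plist g m, uperm k g (uperm k (inv g) u), fmap B (g, cid m) (eta m a))"
    by (rule Psi_formula[OF rf(1,2,4,3)])
  also have "\<dots> = x" using t rf(5) e(4) by (simp add: isrep_simp)
  finally show ?thesis .
qed

lemma Phi_top: assumes x: "x \<in> topspace (realization k B)" shows "Phi x \<in> topspace (smash k H G A)"
proof -
  obtain n u b where e: "n \<in> mdegs k" "u \<in> msimplex n" "b \<in> carr B n" "x = real_class k B (n, u, b)"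
    using realB_elem[OF x] .
  obtain g m a where r: "brep n b = (g, m, a)" by (cases "brep n b") auto
  have t: "isrep n b (g, m, a)" using brep[OF e(1,3)] r by simp
  note rf = rep_facts[OF e(1,2) t]
  show ?thesis using Phi_formula[OF e(1-3) t] e(4) smash_class_top[OF G H HG A] rf rc_top[OF rf(2,4,3)]
    by (simp add: top_smash_pre)
qed

lemma Psi_top: assumes y: "y \<in> topspace (smash k H G A)" shows "Psi y \<in> topspace (realization k B)"
proof -
  obtain g m v a where e: "g \<in> G" "m \<in> mdegs k" "v \<in> msimplex m" "a \<in> carr A m"
    "y = smash_class k H G A (g, real_class k A (m, v, a))" using smash_elem[OF y] .
  show ?thesis using Psi_formula[OF e(1-4)] e(5) Psi_class[OF e(1) rc_top[OF e(2-4)]]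
      real_act_top[OF G B e(1) real_map_top[OF H A BH eta rc_top[OF e(2-4)]]] by simp
qed

lemma Phi_base: "Phi (real_base k B) = smash_base k H G A"
proof -
  let ?z = "replicate k 0"
  have z: "?z \<in> mdegs k" by (simp add: mdegs_def)
  have v: "vertex0 k \<in> msimplex ?z" using vertex0_ms[OF G B] .
  have "Phi (real_base k B) = smash_class k H G A (id, real_class k A (?z, uperm k (inv id) (vertex0 k), bpt A ?z))"
    unfolding real_base_def by (rule Phi_formula[OF z v ss_bpt[OF B z] bpt_rep[OF z]])
  also have "real_class k A (?z, uperm k (inv id) (vertex0 k), bpt A ?z) = real_base k A"
    by (rule base_eq[OF H A z]) (use uperm_msimplex[OF v _ permutes_inv[OF permutes_id]] in simp)
  finally show ?thesis by (simp add: smash_base_def id_def)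
qed

lemma Phi_act: assumes al: "al \<in> G" and x: "x \<in> topspace (realization k B)"
  shows "Phi (real_act k B al x) = smash_act k H G A al (Phi x)"
proof -
  obtain n u b where e: "n \<in> mdegs k" "u \<in> msimplex n" "b \<in> carr B n" "x = real_class k B (n, u, b)"
    using realB_elem[OF x] .
  obtain g m a where r: "brep n b = (g, m, a)" by (cases "brep n b") auto
  have t: "isrep n b (g, m, a)" using brep[OF e(1,3)] r by simp
  note rf = rep_facts[OF e(1,2) t]
  have gp: "g permutes {..<k}" and ap: "al permutes {..<k}" using psg_perm[OF G] rf(1) al by auto
  have pm: "plist g m = n" and bb: "b = fmap B (g, cid m) (eta m a)" using t by (auto simp: isrep_simp)
  have n2: "plist al n \<in> mdegs k" using pl_mdegs[OF e(1)] .
  have u2: "uperm k al u \<in> msimplex (plist al n)" using uperm_msimplex[OF e(2) mdegsD[OF e(1)] ap] .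
  have b2: "fmap B (al, cid n) b \<in> carr B (plist al n)" using ss_carr'[OF B al cid_cmors[OF e(1)]] e(3) by simp
  have t2: "isrep (plist al n) (fmap B (al, cid n) b) (al \<circ> g, m, a)"
  proof -
    have "fmap B (al, cid n) b = fmap B (al \<circ> g, cid m) (eta m a)"
      using ss_F3[OF G B al rf(1) rf(2) nt_carr[OF eta rf(2,3)]] pm bb by simp
    moreover have "plist (al \<circ> g) m = plist al n" using pl_comp[OF ap gp mdegsD[OF rf(2)]] pm by simp
    ultimately show ?thesis using psg_comp[OF G al rf(1)] rf by (simp add: isrep_simp)
  qed
  have uu: "uperm k (inv (al \<circ> g)) (uperm k al u) = uperm k (inv g) u"
    using uperm_comp[OF permutes_inv[OF permutes_compose[OF gp ap]] ap] perm_inv_comp[OF ap gp]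
      pinv_l[OF ap] by (simp add: o_assoc[symmetric])
  have "Phi (real_act k B al x) = Phi (real_class k B (plist al n, uperm k al u, fmap B (al, cid n) b))"
    using real_act_class[OF G B al, of "(n, u, b)"] e by (simp add: pt_act_eq)
  also have "\<dots> = smash_class k H G A (al \<circ> g, real_class k A (m, uperm k (inv g) u, a))"
    using Phi_formula[OF n2 u2 b2 t2] uu by simp
  also have "\<dots> = smash_act k H G A al (smash_class k H G A (g, real_class k A (m, uperm k (inv g) u, a)))"
    using smash_act_class[OF G H HG A al, of "(g, real_class k A (m, uperm k (inv g) u, a))"] rf rc_top[OF rf(2,4,3)]
    by (simp add: top_smash_pre)
  also have "\<dots> = smash_act k H G A al (Phi x)" using Phi_formula[OF e(1-3) t] e(4) by simp
  finally show ?thesis .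
qed

end

lemma continuous_from_prod_discrete:
  assumes "\<And>s. s \<in> S \<Longrightarrow> continuous_map X Y (\<lambda>x. f (x, s))"
  shows "continuous_map (prod_topology X (discrete_topology S)) Y f"
proof -
  have "continuous_map (prod_topology (discrete_topology S) X) Y (\<lambda>p. f (snd p, fst p))"
    by (rule continuous_from_discrete_prod) (simp add: assms)
  then have "continuous_map (prod_topology X (discrete_topology S)) Y ((\<lambda>p. f (snd p, fst p)) \<circ> (\<lambda>p. (snd p, fst p)))"
    by (rule continuous_map_compose[rotated]) (intro continuous_map_pairedI continuous_map_fst continuous_map_snd)
  then show ?thesis by (simp add: o_def)
qed

lemma simplex_proj: "continuous_map (simplex_top n) euclideanreal (\<lambda>u. u i j)"
proof -
  have "continuous_map (product_topology (\<lambda>_. product_topology (\<lambda>_. euclideanreal) UNIV) UNIV)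
      euclideanreal ((\<lambda>v. v j) \<circ> (\<lambda>u. u i))"
    by (rule continuous_map_compose; rule continuous_map_product_projection) simp_all
  then show ?thesis unfolding simplex_top_def by (simp add: o_def continuous_map_from_subtopology)
qed

lemma uperm_cont: assumes a: "a permutes {..<k}" and n: "length n = k"
  shows "continuous_map (simplex_top n) (simplex_top (plist a n)) (uperm k a)"
  unfolding simplex_top_def[of "plist a n"]
proof (rule continuous_map_into_subtopology)
  show "continuous_map (simplex_top n) (product_topology (\<lambda>_. product_topology (\<lambda>_. euclideanreal) UNIV) UNIV) (uperm k a)"
    unfolding continuous_map_componentwise_UNIV
  proof (intro allI)
    fix i j
    show "continuous_map (simplex_top n) euclideanreal (\<lambda>x. uperm k a x i j)"
      by (cases "i < k") (simp_all add: uperm_def simplex_proj)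
  qed
  show "uperm k a \<in> topspace (simplex_top n) \<rightarrow> msimplex (plist a n)"
    using uperm_msimplex[OF _ n a] by auto
qed

lemma inj_cont: assumes n: "n \<in> mdegs k" and c: "c \<in> carr C n"
  shows "continuous_map (simplex_top n) (pre_real k C) (\<lambda>v. (n, v, c))"
proof -
  have "continuous_map (simplex_top n) (prod_topology (simplex_top n) (discrete_topology (carr C n))) (\<lambda>v. (v, c))"
    by (rule continuous_map_pairedI) (use c in simp_all)
  moreover have "continuous_map (prod_topology (simplex_top n) (discrete_topology (carr C n))) (pre_real k C) (\<lambda>x. (n, x))"
    unfolding pre_real_def using continuous_map_component_injection[OF n,
        of "\<lambda>n. prod_topology (simplex_top n) (discrete_topology (carr C n))"] .
  ultimately show ?thesis using continuous_map_compose by (fastforce simp: o_def)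
qed

lemma pre_real_cont:
  assumes "\<And>n c. n \<in> mdegs k \<Longrightarrow> c \<in> carr C n \<Longrightarrow> continuous_map (simplex_top n) Y (\<lambda>u. f (n, u, c))"
  shows "continuous_map (pre_real k C) Y f"
  unfolding pre_real_def
  by (rule continuous_from_sum, rule continuous_from_prod_discrete) (use assms in simp)

context
  fixes k H G and A :: "'a ssobj" and B :: "(gmor \<times> 'a) set ssobj" and eta
  assumes G: "perm_subgroup k G" and H: "perm_subgroup k H" and HG: "H \<subseteq> G" and A: "is_ss k H A"
    and lan: "is_lan k H G A B eta"
begin

lemma classB_cont: assumes n: "n \<in> mdegs k" and c: "c \<in> carr B n"
  shows "continuous_map (simplex_top n) (realization k B) (\<lambda>v. real_class k B (n, v, c))"
  using continuous_map_compose[OF inj_cont[OF n c] quotient_imp_continuous_map[OF real_quot[OF G B[OF G H HG A lan]]]]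
  by (simp add: o_def)

lemma classA_cont: assumes n: "n \<in> mdegs k" and c: "c \<in> carr A n"
  shows "continuous_map (simplex_top n) (realization k A) (\<lambda>v. real_class k A (n, v, c))"
  using continuous_map_compose[OF inj_cont[OF n c] quotient_imp_continuous_map[OF real_quot[OF H A]]]
  by (simp add: o_def)

lemma Psi_cont: "continuous_map (smash k H G A) (realization k B) (Psi k A B eta)"
proof (rule continuous_compose_quotient_map[OF smash_quot[OF G H HG A]])
  have B: "is_ss k G B" using B[OF G H HG A lan] .
  have "continuous_map (smash_pre k G A) (realization k B) (\<lambda>p. real_act k B (fst p) (real_map k A B eta (snd p)))"
    unfolding smash_pre_def
  proof (rule continuous_from_discrete_prod)
    fix g assume g: "g \<in> G"
    have gp: "g permutes {..<k}" using psg_perm[OF G g] .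
    show "continuous_map (realization k A) (realization k B) (\<lambda>x. real_act k B (fst (g, x)) (real_map k A B eta (snd (g, x))))"
    proof (rule continuous_compose_quotient_map[OF real_quot[OF H A]])
      have "continuous_map (pre_real k A) (realization k B)
          (\<lambda>p. real_class k B (plist g (fst p), uperm k g (fst (snd p)), fmap B (g, cid (fst p)) (eta (fst p) (snd (snd p)))))"
      proof (rule pre_real_cont)
        fix n c assume n: "n \<in> mdegs k" and c: "c \<in> carr A n"
        have c2: "fmap B (g, cid n) (eta n c) \<in> carr B (plist g n)"
          using ss_carr'[OF B g cid_cmors[OF n]] nt_carr[OF eta[OF G H HG A lan] n c] by simp
        show "continuous_map (simplex_top n) (realization k B)
          (\<lambda>u. real_class k B (plist g (fst (n, u, c)), uperm k g (fst (snd (n, u, c))),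
                 fmap B (g, cid (fst (n, u, c))) (eta (fst (n, u, c)) (snd (snd (n, u, c))))))"
          using continuous_map_compose[OF uperm_cont[OF gp mdegsD[OF n]] classB_cont[OF pl_mdegs[OF n] c2]]
          by (simp add: o_def)
      qed
      then show "continuous_map (pre_real k A) (realization k B)
          ((\<lambda>x. real_act k B (fst (g, x)) (real_map k A B eta (snd (g, x)))) \<circ> real_class k A)"
      proof (rule continuous_map_eq)
        fix p assume p: "p \<in> topspace (pre_real k A)"
        obtain n u c where e: "p = (n, u, c)" "n \<in> mdegs k" "u \<in> msimplex n" "c \<in> carr A n"
          using class_cases[OF H A p] .
        have "real_map k A B eta (real_class k A (n, u, c)) = real_class k B (n, u, eta n c)"
          by (rule real_map_class[OF H A BH[OF G H HG A lan] eta[OF G H HG A lan]]) (use e in simp)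
        moreover have "real_act k B g (real_class k B (n, u, eta n c)) = real_class k B (pt_act k B g (n, u, eta n c))"
          by (rule real_act_class[OF G B g]) (use e nt_carr[OF eta[OF G H HG A lan] e(2,4)] in simp)
        ultimately show "real_class k B (plist g (fst p), uperm k g (fst (snd p)), fmap B (g, cid (fst p)) (eta (fst p) (snd (snd p)))) =
          ((\<lambda>x. real_act k B (fst (g, x)) (real_map k A B eta (snd (g, x)))) \<circ> real_class k A) p"
          using e by (simp add: pt_act_eq)
      qed
    qed
  qed
  then show "continuous_map (smash_pre k G A) (realization k B) (Psi k A B eta \<circ> smash_class k H G A)"
  proof (rule continuous_map_eq)
    fix p assume p: "p \<in> topspace (smash_pre k G A)"
    then show "real_act k B (fst p) (real_map k A B eta (snd p)) = (Psi k A B eta \<circ> smash_class k H G A) p"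
      using Psi_class[OF G H HG A lan, of "fst p" "snd p"] by (cases p) (simp add: top_smash_pre)
  qed
qed


lemma Phi_cont: "continuous_map (realization k B) (smash k H G A) (Phi k H G A B eta)"
proof (rule continuous_compose_quotient_map[OF real_quot[OF G B[OF G H HG A lan]]])
  have B: "is_ss k G B" using B[OF G H HG A lan] .
  have "continuous_map (pre_real k B) (smash k H G A) (Fp k H G A B eta)"
  proof (rule pre_real_cont)
    fix n b assume n: "n \<in> mdegs k" and b: "b \<in> carr B n"
    obtain g m a where r: "brep k G A B eta n b = (g, m, a)" by (cases "brep k G A B eta n b") auto
    have t: "isrep k G A B eta n b (g, m, a)" using brep[OF G H HG A lan n b] r by simp
    have g: "g \<in> G" "m \<in> mdegs k" "a \<in> carr A m" "plist g m = n" using t by (auto simp: isrep_simp[OF G H HG A lan])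
    have gp: "g permutes {..<k}" using psg_perm[OF G g(1)] .
    have nm: "plist (inv g) n = m" using g(4) pl_inv[OF gp mdegsD[OF g(2)]] by simp
    have c1: "continuous_map (simplex_top n) (simplex_top m) (uperm k (inv g))"
      using uperm_cont[OF permutes_inv[OF gp] mdegsD[OF n]] nm by simp
    have c2: "continuous_map (realization k A) (smash_pre k G A) (\<lambda>x. (g, x))"
      unfolding smash_pre_def by (rule continuous_map_pairedI) (use g in simp_all)
    have c3: "continuous_map (simplex_top n) (smash k H G A)
        (\<lambda>u. smash_class k H G A (g, real_class k A (m, uperm k (inv g) u, a)))"
      using continuous_map_compose[OF continuous_map_compose[OF continuous_map_compose[OF c1 classA_cont[OF g(2,3)]] c2]
          quotient_imp_continuous_map[OF smash_quot[OF G H HG A]]]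
      by (simp add: o_def)
    show "continuous_map (simplex_top n) (smash k H G A) (\<lambda>u. Fp k H G A B eta (n, u, b))"
    proof (rule continuous_map_eq[OF c3])
      fix u assume "u \<in> topspace (simplex_top n)"
      then have u: "u \<in> msimplex n" by simp
      show "smash_class k H G A (g, real_class k A (m, uperm k (inv g) u, a)) = Fp k H G A B eta (n, u, b)"
        using F_rep[OF G H HG A lan n b t u] by (simp add: Sm_simp[OF G H HG A lan])
    qed
  qed
  then show "continuous_map (pre_real k B) (smash k H G A) (Phi k H G A B eta \<circ> real_class k B)"
  proof (rule continuous_map_eq)
    fix p assume p: "p \<in> topspace (pre_real k B)"
    show "Fp k H G A B eta p = (Phi k H G A B eta \<circ> real_class k B) p"
      using Phi_class[OF G H HG A lan p] by simp
  qed
qed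

lemma Phi_homeo: "based_G_homeo G (realization k B) (real_base k B) (real_act k B)
    (smash k H G A) (smash_base k H G A) (smash_act k H G A) (Phi k H G A B eta)"
  unfolding based_G_homeo_def
proof (intro conjI ballI)
  show "homeomorphic_map (realization k B) (smash k H G A) (Phi k H G A B eta)"
    unfolding homeomorphic_map_maps homeomorphic_maps_def
    using Phi_cont Psi_cont Phi_Psi[OF G H HG A lan] Psi_Phi[OF G H HG A lan] by blast
  show "Phi k H G A B eta (real_base k B) = smash_base k H G A" using Phi_base[OF G H HG A lan] .
  fix al x assume "al \<in> G" "x \<in> topspace (realization k B)"
  then show "Phi k H G A B eta (real_act k B al x) = smash_act k H G A al (Phi k H G A B eta x)"
    using Phi_act[OF G H HG A lan] by blast
qed

end

lemma smash_map_class: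
  assumes G: "perm_subgroup k G" and H: "perm_subgroup k H" and HG: "H \<subseteq> G"
    and A: "is_ss k H A" and A': "is_ss k H A'" and s: "nat_trans k H A A' s"
    and g: "g \<in> G" and y: "y \<in> topspace (realization k A)"
  shows "smash_map k H G A A' s (smash_class k H G A (g, y)) = smash_class k H G A' (g, real_map k A A' s y)"
proof -
  have p: "(g, y) \<in> topspace (smash_pre k G A)" using g y by (simp add: top_smash_pre)
  have "\<And>a b. smash_gen k H G A a b \<Longrightarrow> smash_class k H G A' (fst a, real_map k A A' s (snd a)) =
       smash_class k H G A' (fst b, real_map k A A' s (snd b))"
  proof -
    fix a b assume "smash_gen k H G A a b"
    then show "smash_class k H G A' (fst a, real_map k A A' s (snd a)) = smash_class k H G A' (fst b, real_map k A A' s (snd b))"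
      unfolding smash_gen_def
    proof (elim disjE bexE conjE)
      fix g h x assume gh: "g \<in> G" "h \<in> H" "x \<in> topspace (realization k A)" "a = (g \<circ> h, x)" "b = (g, real_act k A h x)"
      have mx: "real_map k A A' s x \<in> topspace (realization k A')" using real_map_top[OF H A A' s gh(3)] .
      have "smash_class k H G A' (g \<circ> h, real_map k A A' s x) = smash_class k H G A' (g, real_act k A' h (real_map k A A' s x))"
        by (rule smash_gen_class[OF G H HG A'], unfold smash_gen_def, rule disjI1, rule bexI[of _ g],
            rule bexI[of _ h], rule bexI[of _ "real_map k A A' s x"]) (use gh mx in simp_all)
      also have "real_act k A' h (real_map k A A' s x) = real_map k A A' s (real_act k A h x)"
        using real_map_act[OF H A A' s gh(2,3)] by simp
      finally have calc: "smash_class k H G A' (g \<circ> h, real_map k A A' s x) = smash_class k H G A' (g, real_map k A A' s (real_act k A h x))" .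
      show ?thesis by (simp only: gh(4) gh(5) fst_conv snd_conv) (rule calc)
    next
      fix g g' assume gg: "g \<in> G" "g' \<in> G" "a = (g, real_base k A)" "b = (g', real_base k A)"
      have "smash_class k H G A' (g, real_base k A') = smash_class k H G A' (g', real_base k A')"
        by (rule smash_gen_class[OF G H HG A']) (use gg in \<open>auto simp: smash_gen_def\<close>)
      then show ?thesis using gg real_map_base[OF H A A' s] by simp
    qed
  qed
  from smash_descend[OF G H HG A p, of "\<lambda>q. smash_class k H G A' (fst q, real_map k A A' s (snd q))", OF this]
  show ?thesis by (simp add: smash_map_def Let_def smash_class_def)
qed

theorem proposition5p4:
  fixes k :: nat and H G :: "perm set"
  assumes "perm_subgroup k G" and "perm_subgroup k H" and "H \<subseteq> G"
  shows "\<exists>\<Phi> :: 'a ssobj \<Rightarrow> (gmor \<times> 'a) set ssobj \<Rightarrow> (mdeg \<Rightarrow> 'a \<Rightarrow> (gmor \<times> 'a) set)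
               \<Rightarrow> (gmor \<times> 'a) set rpt \<Rightarrow> 'a spt.
     (\<forall>A B \<eta>. is_lan k H G A B \<eta> \<longrightarrow>
        based_G_homeo G (realization k B) (real_base k B) (real_act k B)
                        (smash k H G A) (smash_base k H G A) (smash_act k H G A) (\<Phi> A B \<eta>)) \<and>
     (\<forall>A A' B B' \<eta> \<eta>' \<psi> \<sigma>.
        is_lan k H G A B \<eta> \<and> is_lan k H G A' B' \<eta>' \<and> nat_trans k H A A' \<psi> \<and>
        nat_trans k G B B' \<sigma> \<and> (\<forall>n\<in>mdegs k. \<forall>a\<in>carr A n. \<sigma> n (\<eta> n a) = \<eta>' n (\<psi> n a)) \<longrightarrow>
        (\<forall>x\<in>topspace (realization k B).
           \<Phi> A' B' \<eta>' (real_map k B B' \<sigma> x) = smash_map k H G A A' \<psi> (\<Phi> A B \<eta> x)))"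
proof (intro exI[of _ "Phi k H G"] conjI allI impI ballI)
  note G = assms(1) and H = assms(2) and HG = assms(3)
  fix A :: "'a ssobj" and B :: "(gmor \<times> 'a) set ssobj" and \<eta> assume lan: "is_lan k H G A B \<eta>"
  have A: "is_ss k H A" using lan by (simp add: is_lan_def)
  show "based_G_homeo G (realization k B) (real_base k B) (real_act k B)
                        (smash k H G A) (smash_base k H G A) (smash_act k H G A) (Phi k H G A B \<eta>)"
    using Phi_homeo[OF G H HG A lan] .
next
  note G = assms(1) and H = assms(2) and HG = assms(3)
  fix A A' :: "'a ssobj" and B B' :: "(gmor \<times> 'a) set ssobj" and \<eta> \<eta>' \<psi> \<sigma> x
  assume h: "is_lan k H G A B \<eta> \<and> is_lan k H G A' B' \<eta>' \<and> nat_trans k H A A' \<psi> \<and>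
        nat_trans k G B B' \<sigma> \<and> (\<forall>n\<in>mdegs k. \<forall>a\<in>carr A n. \<sigma> n (\<eta> n a) = \<eta>' n (\<psi> n a))"
    and x: "x \<in> topspace (realization k B)"
  have lan: "is_lan k H G A B \<eta>" and lan': "is_lan k H G A' B' \<eta>'" and psi: "nat_trans k H A A' \<psi>"
    and sig: "nat_trans k G B B' \<sigma>" and comm: "\<forall>n\<in>mdegs k. \<forall>a\<in>carr A n. \<sigma> n (\<eta> n a) = \<eta>' n (\<psi> n a)"
    using h by auto
  have A: "is_ss k H A" using lan by (simp add: is_lan_def)
  have A': "is_ss k H A'" using lan' by (simp add: is_lan_def)
  have B: "is_ss k G B" and B': "is_ss k G B'" using B[OF G H HG A lan] B[OF G H HG A' lan'] .
  obtain n u b where e: "n \<in> mdegs k" "u \<in> msimplex n" "b \<in> carr B n" "x = real_class k B (n, u, b)"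
    using realB_elem[OF G H HG A lan x] .
  obtain g m a where r: "brep k G A B \<eta> n b = (g, m, a)" by (cases "brep k G A B \<eta> n b") auto
  have t: "isrep k G A B \<eta> n b (g, m, a)" using brep[OF G H HG A lan e(1,3)] r by simp
  note rf = rep_facts[OF G H HG A lan e(1,2) t]
  have bb: "b = fmap B (g, cid m) (\<eta> m a)" and pm: "plist g m = n"
    using t by (auto simp: isrep_simp[OF G H HG A lan])
  have sb: "\<sigma> n b = fmap B' (g, cid m) (\<eta>' m (\<psi> m a))"
    using nt_nat[OF sig rf(1) cid_cmors[OF rf(2)]] nt_carr[OF eta[OF G H HG A lan] rf(2,3)] bb pm comm rf(2,3) by simp
  have t': "isrep k G A' B' \<eta>' n (\<sigma> n b) (g, m, \<psi> m a)"
    using sb rf pm nt_carr[OF psi rf(2,3)] by (simp add: isrep_simp[OF G H HG A' lan'])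
  have "Phi k H G A' B' \<eta>' (real_map k B B' \<sigma> x) = Phi k H G A' B' \<eta>' (real_class k B' (n, u, \<sigma> n b))"
    using real_map_class[OF G B B' sig, of n u b] e by simp
  also have "\<dots> = smash_class k H G A' (g, real_class k A' (m, uperm k (inv g) u, \<psi> m a))"
    by (rule Phi_formula[OF G H HG A' lan' e(1,2) nt_carr[OF sig e(1,3)] t'])
  also have "real_class k A' (m, uperm k (inv g) u, \<psi> m a) = real_map k A A' \<psi> (real_class k A (m, uperm k (inv g) u, a))"
    using real_map_class[OF H A A' psi, of m "uperm k (inv g) u" a] rf by simp
  also have "smash_class k H G A' (g, \<dots>) = smash_map k H G A A' \<psi> (smash_class k H G A (g, real_class k A (m, uperm k (inv g) u, a)))"
    using smash_map_class[OF G H HG A A' psi rf(1) rc_top[OF G H HG A lan rf(2,4,3)]] by simp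
  also have "smash_class k H G A (g, real_class k A (m, uperm k (inv g) u, a)) = Phi k H G A B \<eta> x"
    using Phi_formula[OF G H HG A lan e(1-3) t] e(4) by simp
  finally show "Phi k H G A' B' \<eta>' (real_map k B B' \<sigma> x) = smash_map k H G A A' \<psi> (Phi k H G A B \<eta> x)" .
qed


end
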